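(* Let $\psi\in\mathbf{\Psi}_n$ and $\psi^*(s):=\max_{t\in\Omega_n}\frac{\langle t,s\rangle}{\psi(t)}$ for $s\in\Omega_n$. Then: (i) $\psi^*\in\mathbf{\Psi}_n$; (ii) the dual norm $|\!|\!|\cdot|\!|\!|_{\psi^*}$ of $|\!|\!|\cdot|\!|\!|_\psi$ belongs to $\mathbf{N}^{\rm sc}_{(X^n)^*}$ if and only if $\psi^*\in\mathbf{\Psi}^{\rm sc}_n$ and $\|\cdot\|_{X^*}$ is strictly convex; (iii) $\psi^*(s)=|\!|\!|(s_1\mathbf{u}^*_1,\ldots,s_{n}\mathbf{u}^*_n)|\!|\!|_{\psi^*}$ for all $(\mathbf{u}^*_1,\ldots,\mathbf{u}^*_n)\in \mathbb{S}_{X^*}\times\ldots\times\mathbb{S}_{X^*}$ and $s:=(s_1,\ldots,s_{n})\in\Omega_n$; (iv) $\langle \bar t,\bar s\rangle=\psi(\bar t)\psi^*(\bar s)$ for some $\bar t,\bar s\in\Omega_n$ if and only if $\bar s/|\!|\!|\bar s|\!|\!|_{\psi^*}\in \partial|\!|\!|\cdot|\!|\!|_{\psi} (\bar t)$ (here $|\!|\!|\cdot|\!|\!|_\psi$ and $|\!|\!|\cdot|\!|\!|_{\psi^*}$ are the corresponding norms on $\mathbb{R}^n$, i.e., with $X=\mathbb{R}$ and the absolute value); (v) $\psi(t)=\max_{s\in\Omega_n}\frac{\langle t,s\rangle}{\psi^*(s)}$ for all $t\in\Omega_n$.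
   Context: Let $(X,\|\cdot\|)$ be a normed vector space, $n\ge2$, $\mathbb{S}_{X^*}$ the unit sphere of $X^*$, $(X^n)^*\cong(X^* )^n$. $\Omega_n:=\{t\in\mathbb{R}^n\mid t_i\ge0,\ \sum_i t_i=1\}$, $\Omega_n^\circ:=\{t\in\Omega_n\mid t_i<1\ \forall i\}$. $\mathbf{\Psi}_n$ is the class of convex continuous $\psi:\Omega_n\to\mathbb{R}$ with (B1) $\psi(\mathbf{e}_i)=1$ for all standard unit vectors $\mathbf{e}_i$ and (B2) $\psi(t)\ge(1-t_i)\psi\big(\frac{t_1}{1-t_i},\ldots,\frac{t_{i-1}}{1-t_i},0,\frac{t_{i+1}}{1-t_i},\ldots,\frac{t_n}{1-t_i}\big)$ for all $t\in\Omega_n^\circ$, $i=1,\ldots,n$; $\mathbf{\Psi}^{\rm sc}_n$ is its strictly convex subclass. For $\psi\in\mathbf{\Psi}_n$, $|\!|\!|x|\!|\!|_\psi:=\big(\sum_{i}\|x_i\|\big)\,\psi\big(\frac{\|x_1\|}{\sum_{i}\|x_i\|},\ldots,\frac{\|x_n\|}{\sum_{i}\|x_i\|}\big)$ for $x\ne0$, $|\!|\!|0|\!|\!|_\psi:=0$. Its dual norm on $(X^n)^*$ is $|\!|\!|(x_1^*,\ldots,x_n^* )|\!|\!|_{\psi^*}=\max_{t\in\Omega_n}\frac{\sum_i t_i\|x_i^*\|}{\psi(t)}$, which coincides with the analogous construction using $\psi^*$ and the dual norm $\|\cdot\|_{X^*}$. $\mathbf{N}^{\rm sc}_{(X^n)^*}$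 is the family of strictly convex norms $|\!|\!|\cdot|\!|\!|$ on $(X^* )^n$ satisfying sign-symmetry $|\!|\!|(x^*_1,\ldots,x^*_n)|\!|\!|=|\!|\!|(\pm x^*_1,\ldots,\pm x^*_n)|\!|\!|$ and compatibility $|\!|\!|(0,\ldots,0,v^*,0,\ldots,0)|\!|\!|=\|v^*\|$ for all $v^*\in X^*$ in any position. $\partial$ denotes the convex subdifferential. *)

theory Defs
  imports "HOL-Analysis.Analysis"
begin

definition OmegaN :: "(real^'n) set" where
  "OmegaN = {t. (\<forall>i. 0 \<le> t$i) \<and> (\<Sum>i\<in>UNIV. t$i) = 1}"

definition OmegaO :: "(real^'n) set" where
  "OmegaO = {t \<in> OmegaN. \<forall>i. t$i < 1}"

definition strictly_convex_fun_on :: "'b::real_vector set \<Rightarrow> ('b \<Rightarrow> real) \<Rightarrow> bool" where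
  "strictly_convex_fun_on S f \<longleftrightarrow> convex_on S f \<and>
     (\<forall>x\<in>S. \<forall>y\<in>S. \<forall>u::real. x \<noteq> y \<and> 0 < u \<and> u < 1 \<longrightarrow>
        f (u *\<^sub>R x + (1 - u) *\<^sub>R y) < u * f x + (1 - u) * f y)"

definition Psi :: "((real^'n) \<Rightarrow> real) set" where
  "Psi = {\<psi>. convex_on OmegaN \<psi> \<and> continuous_on OmegaN \<psi> \<and>
      (\<forall>i. \<psi> (axis i 1) = 1) \<and>
      (\<forall>t\<in>OmegaO. \<forall>i. \<psi> t \<ge> (1 - t$i) *
           \<psi> (\<chi> j. if j = i then 0 else t$j / (1 - t$i)))}"

definition Psi_sc :: "((real^'n) \<Rightarrow> real) set" where
  "Psi_sc = {\<psi>\<in>Psi. strictly_convex_fun_on OmegaN \<psi>}"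

definition psi_star :: "((real^'n) \<Rightarrow> real) \<Rightarrow> (real^'n) \<Rightarrow> real" where
  "psi_star \<psi> s = (SUP t\<in>OmegaN. (t \<bullet> s) / \<psi> t)"

text \<open>The psi-norm on X^n (X any real normed space; X = real gives the norm on R^n).\<close>
definition psi_norm :: "((real^'n) \<Rightarrow> real) \<Rightarrow> ('a::real_normed_vector)^'n \<Rightarrow> real" where
  "psi_norm \<psi> x = (if x = 0 then 0 else
     (\<Sum>i\<in>UNIV. norm (x$i)) * \<psi> (\<chi> i. norm (x$i) / (\<Sum>j\<in>UNIV. norm (x$j))))"

text \<open>The dual norm of psi_norm on (X^n)^* = (X^*)^n, X^* = bounded linear functionals,
  given by the formula max over t in Omega_n of (sum_i t_i ||x_i^*||)/psi(t).\<close>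
definition psi_dual_norm :: "((real^'n) \<Rightarrow> real) \<Rightarrow> ('a::real_normed_vector \<Rightarrow>\<^sub>L real)^'n \<Rightarrow> real" where
  "psi_dual_norm \<psi> f = (SUP t\<in>OmegaN. (\<Sum>i\<in>UNIV. t$i * norm (f$i)) / \<psi> t)"

definition is_norm :: "('b::real_vector \<Rightarrow> real) \<Rightarrow> bool" where
  "is_norm N \<longleftrightarrow> (\<forall>x. N x = 0 \<longleftrightarrow> x = 0) \<and> (\<forall>x y. N (x + y) \<le> N x + N y) \<and>
     (\<forall>c x. N (c *\<^sub>R x) = \<bar>c\<bar> * N x)"

definition strictly_convex_norm :: "('b::real_vector \<Rightarrow> real) \<Rightarrow> bool" where
  "strictly_convex_norm N \<longleftrightarrow>
     (\<forall>x y. N x = 1 \<and> N y = 1 \<and> x \<noteq> y \<longrightarrow> N ((1/2) *\<^sub>R (x + y)) < 1)"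

definition Nsc :: "(('b::real_normed_vector)^'n \<Rightarrow> real) set" where
  "Nsc = {N. is_norm N \<and> strictly_convex_norm N \<and>
      (\<forall>x (\<epsilon>::'n \<Rightarrow> real). (\<forall>i. \<epsilon> i = 1 \<or> \<epsilon> i = -1) \<longrightarrow> N (\<chi> i. \<epsilon> i *\<^sub>R x$i) = N x) \<and>
      (\<forall>i v. N (\<chi> j. if j = i then v else 0) = norm v)}"

definition subdiff :: "('b::real_inner \<Rightarrow> real) \<Rightarrow> 'b \<Rightarrow> 'b set" where
  "subdiff f x = {g. \<forall>y. f y \<ge> f x + g \<bullet> (y - x)}"

end

theory Submission
  imports Defs
begin


definition sublin :: "('v::real_vector \<Rightarrow> real) \<Rightarrow> bool" where
  "sublin q \<longleftrightarrow> (\<forall>x y. q (x + y) \<le> q x + q y) \<and> (\<forall>c x. 0 \<le> c \<longrightarrow> q (c *\<^sub>R x) = c * q x)"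

lemma sublin_add: "sublin q \<Longrightarrow> q (x + y) \<le> q x + q y"
  by (simp add: sublin_def)

lemma sublin_scale: "sublin q \<Longrightarrow> 0 \<le> c \<Longrightarrow> q (c *\<^sub>R x) = c * q x"
  by (simp add: sublin_def)

lemma sublin_zero: "sublin q \<Longrightarrow> q 0 = 0"
  using sublin_scale[of q 0 0] by simp

lemma sublin_neg: "sublin q \<Longrightarrow> - q (- x) \<le> q x"
  using sublin_add[of q x "-x"] sublin_zero[of q] by simp

lemma cInf_scale:
  fixes c :: real
  assumes "c > 0" "S \<noteq> {}" "bdd_below S"
  shows "Inf ((\<lambda>v. c * v) ` S) = c * Inf S"
proof (rule antisym)
  have b2: "bdd_below ((\<lambda>v. c * v) ` S)"
  proof -
    obtain m where "\<forall>x\<in>S. m \<le> x" using assms(3) by (auto simp: bdd_below_def)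
    hence "\<forall>v\<in>S. c * m \<le> c * v" using assms(1) by (simp add: mult_left_mono)
    thus ?thesis by (auto simp: bdd_below_def)
  qed
  show "Inf ((\<lambda>v. c * v) ` S) \<le> c * Inf S"
  proof -
    have "Inf ((\<lambda>v. c * v) ` S) / c \<le> Inf S"
    proof (rule cInf_greatest[OF assms(2)])
      fix v assume "v \<in> S"
      hence "Inf ((\<lambda>v. c * v) ` S) \<le> c * v" using b2 by (intro cInf_lower) auto
      thus "Inf ((\<lambda>v. c * v) ` S) / c \<le> v" using assms(1) by (simp add: field_simps)
    qed
    thus ?thesis using assms(1) by (simp add: field_simps)
  qed
  show "c * Inf S \<le> Inf ((\<lambda>v. c * v) ` S)"
    using assms by (intro cInf_greatest) (auto intro!: mult_left_mono cInf_lower)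
qed

definition qdir :: "('v::real_vector \<Rightarrow> real) \<Rightarrow> 'v \<Rightarrow> 'v \<Rightarrow> real" where
  "qdir q y x = Inf ((\<lambda>s. q (x + s *\<^sub>R y) - s * q y) ` {0..})"

lemma qdir_term_lb:
  assumes "sublin q" "0 \<le> s"
  shows "- q (- x) \<le> q (x + s *\<^sub>R y) - s * q y"
proof -
  have "q (s *\<^sub>R y) \<le> q (x + s *\<^sub>R y) + q (- x)"
    using sublin_add[OF assms(1), of "x + s *\<^sub>R y" "-x"] by simp
  thus ?thesis using sublin_scale[OF assms] by simp
qed

lemma qdir_bdd:
  assumes "sublin q"
  shows "bdd_below ((\<lambda>s. q (x + s *\<^sub>R y) - s * q y) ` {0..})"
  using qdir_term_lb[OF assms] by (auto simp: bdd_below_def)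

lemma qdir_le_term:
  assumes "sublin q" "0 \<le> s"
  shows "qdir q y x \<le> q (x + s *\<^sub>R y) - s * q y"
  unfolding qdir_def using assms qdir_bdd[OF assms(1)] by (intro cInf_lower) auto

lemma qdir_ge:
  assumes "sublin q" "\<And>s. 0 \<le> s \<Longrightarrow> m \<le> q (x + s *\<^sub>R y) - s * q y"
  shows "m \<le> qdir q y x"
  unfolding qdir_def using assms by (intro cInf_greatest) auto

lemma qdir_le: "sublin q \<Longrightarrow> qdir q y x \<le> q x"
  using qdir_le_term[of q 0 y x] by simp

lemma qdir_negy: "sublin q \<Longrightarrow> qdir q y (- y) \<le> - q y"
  using qdir_le_term[of q 1 y "-y"] sublin_zero[of q] by simp

lemma qdir_sublin:
  assumes q: "sublin q"
  shows "sublin (qdir q y)"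
  unfolding sublin_def
proof (intro conjI allI impI)
  fix x1 x2
  show "qdir q y (x1 + x2) \<le> qdir q y x1 + qdir q y x2"
  proof -
    have "qdir q y (x1 + x2) - qdir q y x1 \<le> q (x2 + s2 *\<^sub>R y) - s2 * q y" if s2: "0 \<le> s2" for s2
    proof -
      have "qdir q y (x1 + x2) - (q (x2 + s2 *\<^sub>R y) - s2 * q y) \<le> qdir q y x1"
      proof (rule qdir_ge[OF q])
        fix s1 :: real assume s1: "0 \<le> s1"
        have "qdir q y (x1 + x2) \<le> q (x1 + x2 + (s1 + s2) *\<^sub>R y) - (s1 + s2) * q y"
          using qdir_le_term[OF q, of "s1 + s2"] s1 s2 by simp
        also have "q (x1 + x2 + (s1 + s2) *\<^sub>R y) \<le> q (x1 + s1 *\<^sub>R y) + q (x2 + s2 *\<^sub>R y)"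
          using sublin_add[OF q, of "x1 + s1 *\<^sub>R y" "x2 + s2 *\<^sub>R y"]
          by (simp add: algebra_simps)
        finally show "qdir q y (x1 + x2) - (q (x2 + s2 *\<^sub>R y) - s2 * q y)
            \<le> q (x1 + s1 *\<^sub>R y) - s1 * q y" by (simp add: algebra_simps)
      qed
      thus ?thesis by simp
    qed
    hence "qdir q y (x1 + x2) - qdir q y x1 \<le> qdir q y x2"
      by (intro qdir_ge[OF q])
    thus ?thesis by simp
  qed
next
  fix c :: real and x :: 'a
  assume c: "0 \<le> c"
  show "qdir q y (c *\<^sub>R x) = c * qdir q y x"
  proof (cases "c = 0")
    case True
    have "qdir q y 0 = 0"
    proof (rule antisym)
      show "qdir q y 0 \<le> 0" using qdir_le[OF q, of y 0] sublin_zero[OF q] by simp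
      show "0 \<le> qdir q y 0"
        by (rule qdir_ge[OF q]) (simp add: sublin_scale[OF q])
    qed
    thus ?thesis using True by simp
  next
    case False
    hence cp: "c > 0" using c by simp
    have "(\<lambda>s. q (c *\<^sub>R x + s *\<^sub>R y) - s * q y) ` {0..}
        = (\<lambda>v. c * v) ` ((\<lambda>s. q (x + s *\<^sub>R y) - s * q y) ` {0..})"
    proof -
      have e: "q (c *\<^sub>R x + s *\<^sub>R y) - s * q y = c * (q (x + (s / c) *\<^sub>R y) - (s / c) * q y)"
        if "0 \<le> s" for s
      proof -
        have "c *\<^sub>R x + s *\<^sub>R y = c *\<^sub>R (x + (s / c) *\<^sub>R y)" using cp by (simp add: algebra_simps)
        thus ?thesis using sublin_scale[OF q c, of "x + (s / c) *\<^sub>R y"] cp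
          by (simp add: algebra_simps)
      qed
      show ?thesis
      proof (intro equalityI subsetI)
        fix z assume "z \<in> (\<lambda>s. q (c *\<^sub>R x + s *\<^sub>R y) - s * q y) ` {0..}"
        then obtain s where s: "0 \<le> s" "z = q (c *\<^sub>R x + s *\<^sub>R y) - s * q y" by auto
        have "q (x + (s / c) *\<^sub>R y) - (s / c) * q y \<in> (\<lambda>s. q (x + s *\<^sub>R y) - s * q y) ` {0..}"
          using s cp by (intro image_eqI[of _ _ "s / c"]) auto
        hence "c * (q (x + (s / c) *\<^sub>R y) - (s / c) * q y) \<in> (\<lambda>v. c * v) ` ((\<lambda>s. q (x + s *\<^sub>R y) - s * q y) ` {0..})"
          by (rule imageI)
        thus "z \<in> (\<lambda>v. c * v) ` ((\<lambda>s. q (x + s *\<^sub>R y) - s * q y) ` {0..})"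
          using s e[OF s(1)] by simp
      next
        fix z assume "z \<in> (\<lambda>v. c * v) ` ((\<lambda>s. q (x + s *\<^sub>R y) - s * q y) ` {0..})"
        then obtain s where s: "0 \<le> s" "z = c * (q (x + s *\<^sub>R y) - s * q y)" by auto
        have "c * s \<ge> 0" using s cp by simp
        moreover have "z = q (c *\<^sub>R x + (c * s) *\<^sub>R y) - (c * s) * q y"
          using e[OF \<open>c * s \<ge> 0\<close>] s cp by simp
        ultimately show "z \<in> (\<lambda>s. q (c *\<^sub>R x + s *\<^sub>R y) - s * q y) ` {0..}" by auto
      qed
    qed
    thus ?thesis unfolding qdir_def using cInf_scale[OF cp _ qdir_bdd[OF q]] by simp
  qed
qed

lemma sublin_min_linear:
  assumes q: "sublin q" and neg: "\<And>y. q (- y) \<le> - q y"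
  shows "linear q"
proof -
  have n: "q (- y) = - q y" for y using neg[of y] sublin_neg[OF q, of y] by simp
  have add: "q (x + y) = q x + q y" for x y
  proof (rule antisym)
    show "q (x + y) \<le> q x + q y" by (rule sublin_add[OF q])
    have "q (- x + - y) \<le> q (- x) + q (- y)" by (rule sublin_add[OF q])
    hence "q (- (x + y)) \<le> - q x - q y" using n by (simp add: algebra_simps)
    thus "q x + q y \<le> q (x + y)" using n[of "x + y"] by simp
  qed
  have sc: "q (c *\<^sub>R x) = c * q x" for c x
  proof (cases "0 \<le> c")
    case True thus ?thesis by (rule sublin_scale[OF q])
  next
    case False
    have "q (c *\<^sub>R x) = q ((- c) *\<^sub>R (- x))" by simp
    also have "\<dots> = (- c) * q (- x)" using False by (intro sublin_scale[OF q]) auto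
    finally show ?thesis using n by simp
  qed
  show ?thesis by (rule linearI) (simp_all add: add sc)
qed

lemma hahn_banach_sublin:
  fixes p :: "'v::real_vector \<Rightarrow> real"
  assumes p: "sublin p"
  shows "\<exists>f. linear f \<and> (\<forall>x. f x \<le> p x) \<and> f y = p y"
proof -
  define q0 where "q0 = qdir p y"
  have q0: "sublin q0" unfolding q0_def by (rule qdir_sublin[OF p])
  define A where "A = {q. sublin q \<and> (\<forall>x. q x \<le> q0 x)}"
  define P where "P = (\<lambda>a b :: 'v \<Rightarrow> real. \<forall>x. b x \<le> a x)"
  have po: "partial_order_on A (relation_of P A)"
  proof (rule partial_order_on_relation_ofI)
    show "P a a" for a by (simp add: P_def)
    show "P a c" if "P a b" "P b c" for a b c using that by (auto simp: P_def intro: order_trans)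
    show "a = b" if "P a b" "P b a" for a b proof (rule ext)
      fix x show "a x = b x" using that unfolding P_def by (meson order_antisym)
    qed
  qed
  have "\<exists>m \<in> A. \<forall>a \<in> A. P m a \<longrightarrow> a = m"
  proof (rule predicate_Zorn[OF po])
    fix C assume C: "C \<in> Chains (relation_of P A)"
    have CA: "C \<subseteq> A" using C by (auto simp: Chains_def relation_of_def)
    have chain: "\<And>a b. a \<in> C \<Longrightarrow> b \<in> C \<Longrightarrow> P a b \<or> P b a"
      using C by (auto simp: Chains_def relation_of_def)
    show "\<exists>u \<in> A. \<forall>a \<in> C. P a u"
    proof (cases "C = {}")
      case True thus ?thesis using q0 by (auto simp: A_def)
    next
      case False
      define u where "u = (\<lambda>x. Inf ((\<lambda>a. a x) ` C))"
      have lb: "- q0 (- x) \<le> a x" if "a \<in> C" for a x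
      proof -
        have "a \<in> A" using CA that by auto
        hence "sublin a" "a (- x) \<le> q0 (- x)" by (auto simp: A_def)
        thus ?thesis using sublin_neg[of a x] by linarith
      qed
      have bdd: "bdd_below ((\<lambda>a. a x) ` C)" for x
        using lb by (auto simp: bdd_below_def)
      have ule: "u x \<le> a x" if "a \<in> C" for a x
        unfolding u_def using bdd that by (intro cInf_lower) auto
      have uge: "m \<le> u x" if "\<And>a. a \<in> C \<Longrightarrow> m \<le> a x" for m x
        unfolding u_def using False that by (intro cInf_greatest) auto
      have "sublin u"
        unfolding sublin_def
      proof (intro conjI allI impI)
        fix x y
        have H: "u (x + y) \<le> a x + b y" if "a \<in> C" "b \<in> C" for a b
        proof -
          from chain[OF that] show ?thesis
          proof
            assume "P a b"
            hence "u (x + y) \<le> b (x + y)" using ule that by auto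
            also have "\<dots> \<le> b x + b y" using CA that by (auto simp: A_def intro: sublin_add)
            also have "\<dots> \<le> a x + b y" using \<open>P a b\<close> by (simp add: P_def)
            finally show ?thesis .
          next
            assume "P b a"
            hence "u (x + y) \<le> a (x + y)" using ule that by auto
            also have "\<dots> \<le> a x + a y" using CA that by (auto simp: A_def intro: sublin_add)
            also have "\<dots> \<le> a x + b y" using \<open>P b a\<close> by (simp add: P_def)
            finally show ?thesis .
          qed
        qed
        have H2: "u (x + y) - b y \<le> u x" if "b \<in> C" for b
        proof (rule uge)
          fix a assume "a \<in> C"
          thus "u (x + y) - b y \<le> a x" using H[of a b] that by linarith
        qed
        have "u (x + y) - u x \<le> u y"
        proof (rule uge)
          fix b assume "b \<in> C"
          thus "u (x + y) - u x \<le> b y" using H2[of b] by linarith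
        qed
        thus "u (x + y) \<le> u x + u y" by simp
      next
        fix c :: real and x
        assume c: "0 \<le> c"
        show "u (c *\<^sub>R x) = c * u x"
        proof (cases "c = 0")
          case True
          have "\<And>a. a \<in> C \<Longrightarrow> a (0::'v) = 0" using CA sublin_zero by (auto simp: A_def)
          hence "(\<lambda>a. a (0::'v)) ` C = (\<lambda>a. 0) ` C" by (rule image_cong[OF refl])
          hence "(\<lambda>a. a (0::'v)) ` C = {0}" using False image_constant_conv[of 0 C] by simp
          thus ?thesis using True by (simp add: u_def)
        next
          case False': False
          have "\<And>a. a \<in> C \<Longrightarrow> a (c *\<^sub>R x) = c * a x"
            using CA c by (auto simp: A_def sublin_scale)
          hence "(\<lambda>a. a (c *\<^sub>R x)) ` C = (\<lambda>a. c * a x) ` C" by (rule image_cong[OF refl])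
          hence "(\<lambda>a. a (c *\<^sub>R x)) ` C = (\<lambda>v. c * v) ` ((\<lambda>a. a x) ` C)"
            by (simp add: image_image)
          thus ?thesis unfolding u_def using cInf_scale[of c "(\<lambda>a. a x) ` C"] False False' c bdd
            by simp
        qed
      qed
      moreover have "\<forall>x. u x \<le> q0 x"
      proof
        fix x
        obtain a where "a \<in> C" using False by auto
        hence "a \<in> A" using CA by auto
        hence "a x \<le> q0 x" by (simp add: A_def)
        thus "u x \<le> q0 x" using ule[OF \<open>a \<in> C\<close>, of x] by linarith
      qed
      ultimately have "u \<in> A" by (simp add: A_def)
      moreover have "\<forall>a \<in> C. P a u" using ule by (simp add: P_def)
      ultimately show ?thesis by blast
    qed
  qed
  then obtain m where mA: "m \<in> A" and mmin: "\<And>a. a \<in> A \<Longrightarrow> P m a \<Longrightarrow> a = m" by blast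
  have ms: "sublin m" and mq0: "\<And>x. m x \<le> q0 x" using mA by (auto simp: A_def)
  have "m (- z) \<le> - m z" for z
  proof -
    have "qdir m z x \<le> q0 x" for x using qdir_le[OF ms, of z x] mq0[of x] by linarith
    hence "qdir m z \<in> A" using qdir_sublin[OF ms] by (auto simp: A_def)
    moreover have "P m (qdir m z)" using qdir_le[OF ms] by (simp add: P_def)
    ultimately have "qdir m z = m" by (rule mmin)
    thus ?thesis using qdir_negy[OF ms, of z] by simp
  qed
  hence lin: "linear m" by (rule sublin_min_linear[OF ms])
  have le: "\<forall>x. m x \<le> p x"
  proof
    fix x show "m x \<le> p x" using mq0[of x] qdir_le[OF p, of y x] unfolding q0_def by linarith
  qed
  have "m y = - m (- y)" using linear_neg[OF lin, of y] by simp
  also have "\<dots> \<ge> - q0 (- y)" using mq0[of "-y"] by simp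
  finally have "p y \<le> m y" using qdir_negy[OF p, of y] by (simp add: q0_def)
  hence "m y = p y" using le by (simp add: antisym)
  thus ?thesis using lin le by blast
qed



lemma Omega_mem: "t \<in> OmegaN \<longleftrightarrow> (\<forall>i. 0 \<le> t$i) \<and> (\<Sum>i\<in>UNIV. t$i) = 1"
  by (simp add: OmegaN_def)

lemma Omega_nonneg: "t \<in> OmegaN \<Longrightarrow> 0 \<le> t$i"
  by (simp add: OmegaN_def)

lemma Omega_sum: "t \<in> OmegaN \<Longrightarrow> (\<Sum>i\<in>UNIV. t$i) = 1"
  by (simp add: OmegaN_def)

lemma Omega_le1: "t \<in> OmegaN \<Longrightarrow> t$i \<le> 1"
  using member_le_sum[of i UNIV "\<lambda>i. t$i"] by (simp add: OmegaN_def)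

lemma axis_Omega: "axis i 1 \<in> OmegaN"
  by (simp add: OmegaN_def axis_def)

lemma Omega_ne: "OmegaN \<noteq> {}"
  using axis_Omega by blast

lemma Omega_ex_pos: "t \<in> OmegaN \<Longrightarrow> \<exists>k. 0 < t$k"
proof (rule ccontr)
  assume t: "t \<in> OmegaN" and "\<not> (\<exists>k. 0 < t$k)"
  hence "\<forall>k. t$k = 0" using Omega_nonneg[OF t] by (simp add: not_less order_antisym)
  thus False using Omega_sum[OF t] by simp
qed

lemma Omega_nz: "t \<in> OmegaN \<Longrightarrow> t \<noteq> 0"
proof
  assume t: "t \<in> OmegaN" and z: "t = 0"
  obtain k where "0 < t$k" using Omega_ex_pos[OF t] by blast
  thus False using z by simp
qed

lemma convex_Omega: "convex OmegaN"
  unfolding convex_def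
proof (intro ballI allI impI)
  fix x y :: "real^'n" and u v :: real
  assume x: "x \<in> OmegaN" and y: "y \<in> OmegaN" and uv: "0 \<le> u" "0 \<le> v" "u + v = 1"
  have "(\<Sum>i\<in>UNIV. (u *\<^sub>R x + v *\<^sub>R y)$i) = u * (\<Sum>i\<in>UNIV. x$i) + v * (\<Sum>i\<in>UNIV. y$i)"
    by (simp add: sum.distrib sum_distrib_left)
  also have "\<dots> = 1" using Omega_sum[OF x] Omega_sum[OF y] uv by simp
  finally show "u *\<^sub>R x + v *\<^sub>R y \<in> OmegaN"
    using Omega_nonneg[OF x] Omega_nonneg[OF y] uv by (simp add: OmegaN_def)
qed

lemma inner_vec_real: "(t::real^'n) \<bullet> s = (\<Sum>i\<in>UNIV. t$i * s$i)"
  by (simp add: inner_vec_def)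

lemma sum_if_zero:
  fixes h :: "'n::finite \<Rightarrow> real"
  shows "(\<Sum>j\<in>UNIV. if j = i then 0 else h j) = (\<Sum>j\<in>UNIV. h j) - h i"
proof -
  have "(\<Sum>j\<in>UNIV. h j) = (\<Sum>j\<in>UNIV. (if j = i then 0 else h j) + (if j = i then h j else 0))"
    by (rule sum.cong) auto
  also have "\<dots> = (\<Sum>j\<in>UNIV. if j = i then 0 else h j) + h i"
    by (simp add: sum.distrib)
  finally show ?thesis by simp
qed

lemma psi_ge:
  fixes \<psi> :: "(real^'n) \<Rightarrow> real"
  assumes psi: "\<psi> \<in> Psi" and t: "t \<in> OmegaN"
  shows "t$k \<le> \<psi> t"
proof -
  have B2: "\<And>t i. t \<in> OmegaO \<Longrightarrow> \<psi> t \<ge> (1 - t$i) * \<psi> (\<chi> j. if j = i then 0 else t$j / (1 - t$i))"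
    and ax: "\<And>i. \<psi> (axis i 1) = 1" using psi by (auto simp: Psi_def)
  have "\<forall>t. card {j. t$j \<noteq> 0} = m \<longrightarrow> t \<in> OmegaN \<longrightarrow> t$k \<le> \<psi> t" for m
  proof (induction m rule: less_induct)
    case (less m)
    show ?case
    proof (intro allI impI)
      fix t :: "real^'n"
      assume cm: "card {j. t$j \<noteq> 0} = m" and tO: "t \<in> OmegaN"
      have t0: "\<And>i. 0 \<le> t$i" and ts: "(\<Sum>i\<in>UNIV. t$i) = 1" and le1: "\<And>i. t$i \<le> 1"
        using tO by (auto simp: Omega_nonneg Omega_sum Omega_le1)
      show "t$k \<le> \<psi> t"
      proof (cases "\<exists>j. t$j = 1")
        case True
        then obtain j where tj: "t$j = 1" by auto
        have "t$i = 0" if "i \<noteq> j" for i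
        proof -
          have "(\<Sum>l\<in>{i,j}. t$l) \<le> (\<Sum>l\<in>UNIV. t$l)"
            by (rule sum_mono2) (auto simp: t0)
          hence "t$i + t$j \<le> 1" using that ts by simp
          thus ?thesis using tj t0[of i] by simp
        qed
        hence "t = axis j 1" by (auto simp: vec_eq_iff axis_def tj)
        hence "\<psi> t = 1" using ax by simp
        thus ?thesis using le1 by simp
      next
        case False
        have lt1: "t$i < 1" for i using le1[of i] False by (simp add: order_less_le)
        hence tOO: "t \<in> OmegaO" using tO by (simp add: OmegaO_def)
        have "\<exists>i. i \<noteq> k \<and> 0 < t$i"
        proof (rule ccontr)
          assume "\<not> ?thesis"
          have z: "t$i = 0" if "i \<noteq> k" for i
          proof -
            have "\<not> 0 < t$i" using \<open>\<not> (\<exists>i. i \<noteq> k \<and> 0 < t$i)\<close> that by blast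
            thus ?thesis using t0[of i] by linarith
          qed
          have "(\<Sum>j\<in>UNIV. t$j) = (\<Sum>j\<in>UNIV. if j = k then t$k else 0)"
            by (rule sum.cong) (auto simp: z)
          thus False using ts lt1[of k] by simp
        qed
        then obtain i where ik: "i \<noteq> k" and ti: "0 < t$i" by auto
        have d: "0 < 1 - t$i" using lt1[of i] by simp
        define t' where "t' = (\<chi> j. if j = i then 0 else t$j / (1 - t$i))"
        have "(\<Sum>j\<in>UNIV. t'$j) = (\<Sum>j\<in>UNIV. (if j = i then 0 else t$j) / (1 - t$i))"
          by (rule sum.cong) (auto simp: t'_def)
        also have "\<dots> = (\<Sum>j\<in>UNIV. (if j = i then 0 else t$j)) / (1 - t$i)"
          by (simp add: sum_divide_distrib)
        also have "\<dots> = 1" using sum_if_zero[of i "\<lambda>j. t$j"] ts d by simp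
        finally have t's: "(\<Sum>j\<in>UNIV. t'$j) = 1" .
        have t'nn: "\<forall>j. 0 \<le> t'$j" using t0 d by (simp add: t'_def)
        have t'O: "t' \<in> OmegaN" using t's t'nn by (simp add: OmegaN_def)
        have s1: "{j. t'$j \<noteq> 0} \<subseteq> {j. t$j \<noteq> 0}" by (auto simp: t'_def)
        have s2: "i \<in> {j. t$j \<noteq> 0}" "i \<notin> {j. t'$j \<noteq> 0}" using ti by (auto simp: t'_def)
        have "{j. t'$j \<noteq> 0} \<subset> {j. t$j \<noteq> 0}" using s1 s2 by blast
        hence "card {j. t'$j \<noteq> 0} < m" unfolding cm[symmetric] by (rule psubset_card_mono[rotated]) simp
        hence "t'$k \<le> \<psi> t'" using less.IH t'O by blast
        have "t'$k = t$k / (1 - t$i)" using ik by (simp add: t'_def)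
        hence "(1 - t$i) * t'$k = t$k" using d by simp
        moreover have "(1 - t$i) * t'$k \<le> (1 - t$i) * \<psi> t'"
          using \<open>t'$k \<le> \<psi> t'\<close> d by (intro mult_left_mono) auto
        ultimately have "t$k \<le> (1 - t$i) * \<psi> t'" by simp
        also have "\<dots> \<le> \<psi> t" using B2[OF tOO, of i] by (simp add: t'_def)
        finally show ?thesis .
      qed
    qed
  qed
  thus ?thesis using t by blast
qed

lemma psi_lb:
  fixes \<psi> :: "(real^'n) \<Rightarrow> real"
  assumes psi: "\<psi> \<in> Psi" and t: "t \<in> OmegaN"
  shows "1 / real CARD('n) \<le> \<psi> t" "0 < \<psi> t"
proof -
  have "(\<Sum>k\<in>UNIV. t$k) \<le> (\<Sum>k\<in>(UNIV::'n set). \<psi> t)"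
    by (rule sum_mono) (rule psi_ge[OF psi t])
  hence "1 \<le> real CARD('n) * \<psi> t" using Omega_sum[OF t] by simp
  thus "1 / real CARD('n) \<le> \<psi> t" by (simp add: field_simps)
  moreover have "0 < 1 / real CARD('n)" by simp
  ultimately show "0 < \<psi> t" by linarith
qed

lemma inner_bound:
  assumes t: "t \<in> OmegaN"
  shows "\<bar>t \<bullet> w\<bar> \<le> (\<Sum>i\<in>UNIV. \<bar>w$i\<bar>)"
proof -
  have "\<bar>t \<bullet> w\<bar> \<le> (\<Sum>i\<in>UNIV. \<bar>t$i * w$i\<bar>)" unfolding inner_vec_real by (rule sum_abs)
  also have "\<dots> \<le> (\<Sum>i\<in>UNIV. \<bar>w$i\<bar>)"
  proof (rule sum_mono)
    fix i
    show "\<bar>t$i * w$i\<bar> \<le> \<bar>w$i\<bar>"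
      using Omega_nonneg[OF t, of i] Omega_le1[OF t, of i]
      by (simp add: abs_mult mult_left_le_one_le)
  qed
  finally show ?thesis .
qed

lemma quot_bound:
  fixes \<psi> :: "(real^'n) \<Rightarrow> real"
  assumes psi: "\<psi> \<in> Psi" and t: "t \<in> OmegaN"
  shows "\<bar>(t \<bullet> w) / \<psi> t\<bar> \<le> real CARD('n) * (\<Sum>i\<in>UNIV. \<bar>w$i\<bar>)"
proof -
  let ?W = "(\<Sum>i\<in>UNIV. \<bar>w$i\<bar>)"
  have p: "0 < \<psi> t" and l: "1 / real CARD('n) \<le> \<psi> t" using psi_lb[OF psi t] by auto
  have l': "1 \<le> real CARD('n) * \<psi> t" using l by (simp add: field_simps)
  have W0: "0 \<le> ?W" by (simp add: sum_nonneg)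
  have "\<bar>(t \<bullet> w) / \<psi> t\<bar> = \<bar>t \<bullet> w\<bar> / \<psi> t" using p by simp
  also have "\<dots> \<le> ?W / \<psi> t" using inner_bound[OF t, of w] p by (simp add: divide_right_mono)
  also have "\<dots> \<le> real CARD('n) * ?W"
  proof -
    have "?W * 1 \<le> ?W * (real CARD('n) * \<psi> t)" using l' W0 by (rule mult_left_mono)
    thus ?thesis using p by (simp add: divide_le_eq mult_ac)
  qed
  finally show ?thesis .
qed

lemma quot_bdd:
  fixes \<psi> :: "(real^'n) \<Rightarrow> real"
  assumes psi: "\<psi> \<in> Psi"
  shows "bdd_above ((\<lambda>t. (t \<bullet> w) / \<psi> t) ` OmegaN)"
  by (rule bdd_aboveI2[where M = "real CARD('n) * (\<Sum>i\<in>UNIV. \<bar>w$i\<bar>)"])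
    (rule abs_le_D1[OF quot_bound[OF psi]])

lemma D_upper:
  fixes \<psi> :: "(real^'n) \<Rightarrow> real"
  assumes psi: "\<psi> \<in> Psi" and t: "t \<in> OmegaN"
  shows "(t \<bullet> w) / \<psi> t \<le> psi_star \<psi> w"
  unfolding psi_star_def using quot_bdd[OF psi] t by (intro cSUP_upper) auto

lemma D_least:
  fixes \<psi> :: "(real^'n) \<Rightarrow> real"
  assumes "\<And>t. t \<in> OmegaN \<Longrightarrow> (t \<bullet> w) / \<psi> t \<le> M"
  shows "psi_star \<psi> w \<le> M"
  unfolding psi_star_def using assms Omega_ne by (intro cSUP_least) auto

lemma D_mul:
  fixes \<psi> :: "(real^'n) \<Rightarrow> real"
  assumes psi: "\<psi> \<in> Psi" and t: "t \<in> OmegaN"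
  shows "t \<bullet> w \<le> \<psi> t * psi_star \<psi> w"
  using D_upper[OF psi t, of w] psi_lb(2)[OF psi t] by (simp add: divide_le_eq mult_ac)

lemma D_zero:
  fixes \<psi> :: "(real^'n) \<Rightarrow> real"
  assumes psi: "\<psi> \<in> Psi"
  shows "psi_star \<psi> (0::(real^'n)) = 0"
proof (rule antisym)
  show "psi_star \<psi> 0 \<le> 0" by (rule D_least) simp
  have "axis k 1 \<bullet> (0::(real^'n)) / \<psi> (axis k 1) \<le> psi_star \<psi> 0" for k
    by (rule D_upper[OF psi axis_Omega])
  thus "0 \<le> psi_star \<psi> 0" by simp
qed

lemma D_scale:
  fixes \<psi> :: "(real^'n) \<Rightarrow> real"
  assumes psi: "\<psi> \<in> Psi" and c: "0 \<le> c"
  shows "psi_star \<psi> (c *\<^sub>R w) = c * psi_star \<psi> w"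
proof (cases "c = 0")
  case True thus ?thesis using D_zero[OF psi] by simp
next
  case False
  hence cp: "0 < c" using c by simp
  show ?thesis
  proof (rule antisym)
    show "psi_star \<psi> (c *\<^sub>R w) \<le> c * psi_star \<psi> w"
    proof (rule D_least)
      fix t :: "real^'n" assume t: "t \<in> OmegaN"
      have "(t \<bullet> (c *\<^sub>R w)) / \<psi> t = c * ((t \<bullet> w) / \<psi> t)" by simp
      also have "\<dots> \<le> c * psi_star \<psi> w" using D_upper[OF psi t] c by (rule mult_left_mono)
      finally show "(t \<bullet> (c *\<^sub>R w)) / \<psi> t \<le> c * psi_star \<psi> w" .
    qed
    have "psi_star \<psi> w \<le> psi_star \<psi> (c *\<^sub>R w) / c"
    proof (rule D_least)
      fix t :: "real^'n" assume t: "t \<in> OmegaN"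
      have "c * ((t \<bullet> w) / \<psi> t) \<le> psi_star \<psi> (c *\<^sub>R w)"
        using D_upper[OF psi t, of "c *\<^sub>R w"] by simp
      have "(t \<bullet> w) / \<psi> t = (c * ((t \<bullet> w) / \<psi> t)) / c" using cp by simp
      also have "\<dots> \<le> psi_star \<psi> (c *\<^sub>R w) / c"
        using \<open>c * ((t \<bullet> w) / \<psi> t) \<le> psi_star \<psi> (c *\<^sub>R w)\<close> cp by (intro divide_right_mono) auto
      finally have "(t \<bullet> w) / \<psi> t \<le> psi_star \<psi> (c *\<^sub>R w) / c" .
      thus "(t \<bullet> w) / \<psi> t \<le> psi_star \<psi> (c *\<^sub>R w) / c" .
    qed
    thus "c * psi_star \<psi> w \<le> psi_star \<psi> (c *\<^sub>R w)" using cp by (simp add: field_simps)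
  qed
qed

lemma D_add:
  fixes \<psi> :: "(real^'n) \<Rightarrow> real"
  assumes psi: "\<psi> \<in> Psi"
  shows "psi_star \<psi> (v + w) \<le> psi_star \<psi> v + psi_star \<psi> w"
proof (rule D_least)
  fix t :: "real^'n" assume t: "t \<in> OmegaN"
  have "(t \<bullet> (v + w)) / \<psi> t = (t \<bullet> v) / \<psi> t + (t \<bullet> w) / \<psi> t"
    by (simp add: inner_add_right add_divide_distrib)
  also have "\<dots> \<le> psi_star \<psi> v + psi_star \<psi> w" using D_upper[OF psi t] by (simp add: add_mono)
  finally show "(t \<bullet> (v + w)) / \<psi> t \<le> psi_star \<psi> v + psi_star \<psi> w" .
qed

lemma D_mono:
  fixes \<psi> :: "(real^'n) \<Rightarrow> real"
  assumes psi: "\<psi> \<in> Psi" and vw: "\<And>i. v$i \<le> w$i"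
  shows "psi_star \<psi> v \<le> psi_star \<psi> w"
proof (rule D_least)
  fix t :: "real^'n" assume t: "t \<in> OmegaN"
  have "t \<bullet> v \<le> t \<bullet> w" unfolding inner_vec_real
    by (rule sum_mono) (simp add: mult_left_mono vw Omega_nonneg[OF t])
  hence "(t \<bullet> v) / \<psi> t \<le> (t \<bullet> w) / \<psi> t" using psi_lb(2)[OF psi t] by (simp add: divide_right_mono)
  also have "\<dots> \<le> psi_star \<psi> w" by (rule D_upper[OF psi t])
  finally show "(t \<bullet> v) / \<psi> t \<le> psi_star \<psi> w" .
qed

lemma D_ge_comp:
  fixes \<psi> :: "(real^'n) \<Rightarrow> real"
  assumes psi: "\<psi> \<in> Psi"
  shows "w$k \<le> psi_star \<psi> w"
proof -
  have "\<psi> (axis k 1) = 1" using psi by (simp add: Psi_def)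
  thus ?thesis using D_upper[OF psi axis_Omega, of k w] by (simp add: inner_axis')
qed

lemma D_axis:
  fixes \<psi> :: "(real^'n) \<Rightarrow> real"
  assumes psi: "\<psi> \<in> Psi"
  shows "psi_star \<psi> (axis i 1) = 1"
proof (rule antisym)
  show "psi_star \<psi> (axis i 1) \<le> 1"
  proof (rule D_least)
    fix t :: "real^'n" assume t: "t \<in> OmegaN"
    show "(t \<bullet> axis i 1) / \<psi> t \<le> 1"
      using psi_ge[OF psi t, of i] psi_lb(2)[OF psi t] by (simp add: inner_axis divide_le_eq)
  qed
  show "1 \<le> psi_star \<psi> (axis i 1)" using D_ge_comp[OF psi, of "axis i 1" i] by simp
qed

lemma D_pos:
  fixes \<psi> :: "(real^'n) \<Rightarrow> real"
  assumes psi: "\<psi> \<in> Psi" and s: "s \<in> OmegaN"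
  shows "0 < psi_star \<psi> s"
proof -
  obtain k where "0 < s$k" using Omega_ex_pos[OF s] by blast
  thus ?thesis using D_ge_comp[OF psi, of s k] by linarith
qed

lemma D_lip:
  fixes \<psi> :: "(real^'n) \<Rightarrow> real"
  assumes psi: "\<psi> \<in> Psi"
  shows "(real CARD('n) * real CARD('n))-lipschitz_on UNIV (psi_star \<psi>)"
proof (rule lipschitz_onI)
  let ?n = "real CARD('n)"
  have one: "psi_star \<psi> v - psi_star \<psi> w \<le> ?n * ?n * norm (v - w)" for v w :: "real^'n"
  proof -
    have a1: "psi_star \<psi> v \<le> psi_star \<psi> w + psi_star \<psi> (v - w)"
      using D_add[OF psi, of w "v - w"] by simp
    have a2: "psi_star \<psi> (v - w) \<le> ?n * (\<Sum>i\<in>UNIV. \<bar>(v - w)$i\<bar>)"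
      by (rule D_least) (rule abs_le_D1[OF quot_bound[OF psi]])
    have a3: "(\<Sum>i\<in>UNIV. \<bar>(v - w)$i\<bar>) \<le> (\<Sum>i\<in>(UNIV::'n set). norm (v - w))"
      by (rule sum_mono) (rule component_le_norm_cart)
    have a4: "(\<Sum>i\<in>(UNIV::'n set). norm (v - w)) = ?n * norm (v - w)" by simp
    have "(\<Sum>i\<in>UNIV. \<bar>(v - w)$i\<bar>) \<le> ?n * norm (v - w)" using a3 a4 by linarith
    hence a5: "?n * (\<Sum>i\<in>UNIV. \<bar>(v - w)$i\<bar>) \<le> ?n * (?n * norm (v - w))"
      by (rule mult_left_mono) simp
    have "psi_star \<psi> v - psi_star \<psi> w \<le> ?n * (?n * norm (v - w))"
      using a1 a2 a5 by linarith
    thus ?thesis by (simp add: mult_ac)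
  qed
  fix x y :: "real^'n"
  show "dist (psi_star \<psi> x) (psi_star \<psi> y) \<le> ?n * ?n * dist x y"
    using one[of x y] one[of y x] by (simp add: dist_real_def dist_norm norm_minus_commute abs_le_iff)
  show "0 \<le> ?n * ?n" by simp
qed

lemma part_i:
  fixes \<psi> :: "(real^'n) \<Rightarrow> real"
  assumes psi: "\<psi> \<in> Psi"
  shows "psi_star \<psi> \<in> Psi"
proof -
  have conv: "convex_on OmegaN (psi_star \<psi>)"
    unfolding convex_on_def
  proof (intro conjI convex_Omega ballI allI impI)
    fix x y :: "real^'n" and u v :: real
    assume "0 \<le> u" "0 \<le> v"
    thus "psi_star \<psi> (u *\<^sub>R x + v *\<^sub>R y) \<le> u * psi_star \<psi> x + v * psi_star \<psi> y"
      using D_add[OF psi, of "u *\<^sub>R x" "v *\<^sub>R y"] D_scale[OF psi] by simp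
  qed
  have cont: "continuous_on OmegaN (psi_star \<psi>)"
    using lipschitz_on_continuous_on[OF D_lip[OF psi]] continuous_on_subset by blast
  have B2: "(1 - s$i) * psi_star \<psi> (\<chi> j. if j = i then 0 else s$j / (1 - s$i)) \<le> psi_star \<psi> s"
    if s: "s \<in> OmegaO" for s i
  proof -
    have sO: "s \<in> OmegaN" and lt: "s$i < 1" using s by (auto simp: OmegaO_def)
    have "(1 - s$i) * psi_star \<psi> (\<chi> j. if j = i then 0 else s$j / (1 - s$i))
        = psi_star \<psi> ((1 - s$i) *\<^sub>R (\<chi> j. if j = i then 0 else s$j / (1 - s$i)))"
      using lt by (intro D_scale[OF psi, symmetric]) simp
    also have "(1 - s$i) *\<^sub>R (\<chi> j. if j = i then 0 else s$j / (1 - s$i)) = (\<chi> j. if j = i then 0 else s$j)"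
      using lt by (auto simp: vec_eq_iff)
    also have "psi_star \<psi> \<dots> \<le> psi_star \<psi> s"
      by (rule D_mono[OF psi]) (simp add: Omega_nonneg[OF sO])
    finally show ?thesis .
  qed
  show ?thesis using conv cont B2 D_axis[OF psi] by (auto simp: Psi_def)
qed



lemma dual_eq:
  fixes \<psi> :: "(real^'n) \<Rightarrow> real" and f :: "('a::real_normed_vector \<Rightarrow>\<^sub>L real)^'n"
  shows "psi_dual_norm \<psi> f = psi_star \<psi> (\<chi> i. norm (f$i))"
  unfolding psi_dual_norm_def psi_star_def by (simp add: inner_vec_real)

lemma part_iii:
  fixes \<psi> :: "(real^'n) \<Rightarrow> real" and u :: "'n \<Rightarrow> ('a::real_normed_vector \<Rightarrow>\<^sub>L real)"
  assumes u: "\<forall>i. norm (u i) = 1" and s: "s \<in> OmegaN"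
  shows "psi_star \<psi> s = psi_dual_norm \<psi> (\<chi> i. s$i *\<^sub>R u i)"
proof -
  have "(\<chi> i. norm ((\<chi> i. s$i *\<^sub>R u i)$i)) = s"
    using u Omega_nonneg[OF s] by (simp add: vec_eq_iff)
  thus ?thesis by (simp add: dual_eq)
qed

lemma psi_norm_Omega:
  fixes \<phi> :: "(real^'n) \<Rightarrow> real"
  assumes t: "t \<in> OmegaN"
  shows "psi_norm \<phi> t = \<phi> t"
proof -
  have n: "norm (t$i) = t$i" for i using Omega_nonneg[OF t, of i] by simp
  have s: "(\<Sum>i\<in>UNIV. norm (t$i)) = 1" using Omega_sum[OF t] by (simp only: n)
  have "(\<chi> i. norm (t$i) / (\<Sum>j\<in>UNIV. norm (t$j))) = t"
    unfolding n by (simp add: Omega_sum[OF t] vec_eq_iff)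
  thus ?thesis using Omega_nz[OF t] s by (simp add: psi_norm_def)
qed

lemma psi_norm_ge:
  fixes \<psi> :: "(real^'n) \<Rightarrow> real"
  assumes psi: "\<psi> \<in> Psi" and s: "s \<in> OmegaN"
  shows "y \<bullet> s \<le> psi_norm \<psi> y * psi_star \<psi> s"
proof (cases "y = 0")
  case True thus ?thesis by (simp add: psi_norm_def)
next
  case False
  define \<sigma> where "\<sigma> = (\<Sum>i\<in>UNIV. \<bar>y$i\<bar>)"
  have \<sigma>0: "0 \<le> \<sigma>" by (simp add: \<sigma>_def sum_nonneg)
  have "\<sigma> \<noteq> 0"
  proof
    assume "\<sigma> = 0"
    hence "\<forall>i\<in>UNIV. \<bar>y$i\<bar> = 0" unfolding \<sigma>_def by (subst sum_nonneg_eq_0_iff[symmetric]) auto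
    hence "y = 0" by (simp add: vec_eq_iff)
    thus False using False by simp
  qed
  hence \<sigma>p: "0 < \<sigma>" using \<sigma>0 by simp
  define w where "w = (\<chi> i. \<bar>y$i\<bar> / \<sigma>)"
  have "(\<Sum>i\<in>UNIV. w$i) = (\<Sum>i\<in>UNIV. \<bar>y$i\<bar> / \<sigma>)" by (simp add: w_def)
  also have "\<dots> = \<sigma> / \<sigma>" by (simp only: \<sigma>_def sum_divide_distrib[symmetric])
  finally have "(\<Sum>i\<in>UNIV. w$i) = \<sigma> / \<sigma>" .
  hence wO: "w \<in> OmegaN" using \<sigma>p by (simp add: OmegaN_def w_def)
  have N: "psi_norm \<psi> y = \<sigma> * \<psi> w" using False by (simp add: psi_norm_def \<sigma>_def w_def)
  have "y \<bullet> s \<le> (\<Sum>i\<in>UNIV. \<bar>y$i\<bar> * s$i)" unfolding inner_vec_real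
    by (rule sum_mono) (simp add: mult_right_mono Omega_nonneg[OF s])
  also have "\<dots> = \<sigma> * (w \<bullet> s)" unfolding inner_vec_real w_def using \<sigma>p
    by (simp add: sum_distrib_left)
  also have "\<dots> \<le> \<sigma> * (\<psi> w * psi_star \<psi> s)" using D_mul[OF psi wO, of s] \<sigma>0 by (rule mult_left_mono)
  finally show ?thesis using N by (simp add: mult_ac)
qed

lemma part_iv:
  fixes \<psi> :: "(real^'n) \<Rightarrow> real"
  assumes psi: "\<psi> \<in> Psi" and t: "t \<in> OmegaN" and s: "s \<in> OmegaN"
  shows "t \<bullet> s = \<psi> t * psi_star \<psi> s \<longleftrightarrow>
            (1 / psi_norm (psi_star \<psi>) s) *\<^sub>R s \<in> subdiff (psi_norm \<psi> :: real^'n \<Rightarrow> real) t"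
proof -
  define c where "c = psi_star \<psi> s"
  have cp: "0 < c" using D_pos[OF psi s] by (simp add: c_def)
  have Ns: "psi_norm (psi_star \<psi>) s = c" using psi_norm_Omega[OF s] by (simp add: c_def)
  have Nt: "psi_norm \<psi> t = \<psi> t" by (rule psi_norm_Omega[OF t])
  have gi: "((1 / c) *\<^sub>R s) \<bullet> (y - t) = (y \<bullet> s - t \<bullet> s) / c" for y :: "real^'n"
    by (simp add: inner_diff_right inner_commute divide_inverse mult.commute)
  have le: "t \<bullet> s \<le> \<psi> t * c" using D_mul[OF psi t, of s] by (simp add: c_def)
  show ?thesis
  proof
    assume eq: "t \<bullet> s = \<psi> t * psi_star \<psi> s"
    show "(1 / psi_norm (psi_star \<psi>) s) *\<^sub>R s \<in> subdiff (psi_norm \<psi>) t"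
      unfolding subdiff_def Ns
    proof (intro CollectI allI)
      fix y :: "real^'n"
      have "y \<bullet> s \<le> psi_norm \<psi> y * c" using psi_norm_ge[OF psi s, of y] by (simp add: c_def)
      hence "(y \<bullet> s) / c \<le> psi_norm \<psi> y" using cp by (simp add: divide_le_eq)
      moreover have "psi_norm \<psi> t + ((1 / c) *\<^sub>R s) \<bullet> (y - t) = (y \<bullet> s) / c"
        using eq cp unfolding gi Nt by (simp add: c_def field_simps)
      ultimately show "psi_norm \<psi> t + ((1 / c) *\<^sub>R s) \<bullet> (y - t) \<le> psi_norm \<psi> y" by simp
    qed
  next
    assume "(1 / psi_norm (psi_star \<psi>) s) *\<^sub>R s \<in> subdiff (psi_norm \<psi>) t"
    hence "\<forall>y. psi_norm \<psi> t + ((1 / c) *\<^sub>R s) \<bullet> (y - t) \<le> psi_norm \<psi> y"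
      unfolding subdiff_def Ns by simp
    hence "psi_norm \<psi> t + ((1 / c) *\<^sub>R s) \<bullet> (0 - t) \<le> psi_norm \<psi> (0::(real^'n))" by blast
    hence "\<psi> t - (t \<bullet> s) / c \<le> 0" unfolding gi Nt by (simp add: psi_norm_def)
    hence "\<psi> t * c \<le> t \<bullet> s" using cp by (simp add: field_simps)
    thus "t \<bullet> s = \<psi> t * psi_star \<psi> s" using le by (simp add: c_def)
  qed
qed



definition Fext :: "((real^'n) \<Rightarrow> real) \<Rightarrow> real^'n \<Rightarrow> real" where
  "Fext \<psi> y = (if y = 0 then 0 else (\<Sum>i\<in>UNIV. y$i) * \<psi> (\<chi> i. y$i / (\<Sum>j\<in>UNIV. y$j)))"

definition nonneg :: "real^'n \<Rightarrow> bool" where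
  "nonneg y \<longleftrightarrow> (\<forall>i. 0 \<le> y$i)"

lemma F_zero: "Fext \<psi> 0 = 0"
  by (simp add: Fext_def)

lemma F_omega_scale:
  assumes t: "t \<in> OmegaN" and c: "0 < c"
  shows "Fext \<psi> (c *\<^sub>R t) = c * \<psi> t"
proof -
  have s: "(\<Sum>i\<in>UNIV. (c *\<^sub>R t)$i) = c" using Omega_sum[OF t] by (simp add: sum_distrib_left[symmetric])
  have nz: "c *\<^sub>R t \<noteq> 0" using Omega_nz[OF t] c by simp
  have "(\<chi> i. (c *\<^sub>R t)$i / (\<Sum>j\<in>UNIV. (c *\<^sub>R t)$j)) = t" unfolding s using c by (simp add: vec_eq_iff)
  thus ?thesis using nz s by (simp add: Fext_def)
qed

lemma F_omega: "t \<in> OmegaN \<Longrightarrow> Fext \<psi> t = \<psi> t"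
  using F_omega_scale[of t 1 \<psi>] by simp

lemma nonneg_repr:
  assumes y: "nonneg y" and nz: "y \<noteq> 0"
  shows "\<exists>\<sigma> w. 0 < \<sigma> \<and> w \<in> OmegaN \<and> y = \<sigma> *\<^sub>R w"
proof -
  define \<sigma> where "\<sigma> = (\<Sum>i\<in>UNIV. y$i)"
  have y0: "\<And>i. 0 \<le> y$i" using y by (simp add: nonneg_def)
  have \<sigma>0: "0 \<le> \<sigma>" unfolding \<sigma>_def by (simp add: sum_nonneg y0)
  have "\<sigma> \<noteq> 0"
  proof
    assume "\<sigma> = 0"
    hence "\<forall>i\<in>UNIV. y$i = 0" unfolding \<sigma>_def by (subst sum_nonneg_eq_0_iff[symmetric]) (auto simp: y0)
    hence "y = 0" by (simp add: vec_eq_iff)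
    thus False using nz by simp
  qed
  hence \<sigma>p: "0 < \<sigma>" using \<sigma>0 by simp
  define w where "w = (1 / \<sigma>) *\<^sub>R y"
  have "(\<Sum>i\<in>UNIV. w$i) = (1 / \<sigma>) * \<sigma>" by (simp add: w_def \<sigma>_def sum_distrib_left)
  hence "w \<in> OmegaN" using \<sigma>p y0 by (simp add: OmegaN_def w_def)
  moreover have "y = \<sigma> *\<^sub>R w" using \<sigma>p by (simp add: w_def)
  ultimately show ?thesis using \<sigma>p by blast
qed

lemma F_nonneg:
  fixes \<psi> :: "(real^'n) \<Rightarrow> real"
  assumes psi: "\<psi> \<in> Psi" and y: "nonneg y"
  shows "0 \<le> Fext \<psi> y"
proof (cases "y = 0")
  case True thus ?thesis by (simp add: F_zero)
next
  case False
  then obtain \<sigma> w where "0 < \<sigma>" "w \<in> OmegaN" "y = \<sigma> *\<^sub>R w" using nonneg_repr[OF y] by blast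
  thus ?thesis using F_omega_scale[of w \<sigma> \<psi>] psi_lb(2)[OF psi \<open>w \<in> OmegaN\<close>] by simp
qed

lemma F_hom:
  fixes \<psi> :: "(real^'n) \<Rightarrow> real"
  assumes y: "nonneg y" and c: "0 \<le> c"
  shows "Fext \<psi> (c *\<^sub>R y) = c * Fext \<psi> y"
proof (cases "y = 0 \<or> c = 0")
  case True thus ?thesis by (auto simp: F_zero)
next
  case False
  then obtain \<sigma> w where sw: "0 < \<sigma>" "w \<in> OmegaN" "y = \<sigma> *\<^sub>R w" using nonneg_repr[OF y] by blast
  have cp: "0 < c" using c False by simp
  have "c *\<^sub>R y = (c * \<sigma>) *\<^sub>R w" using sw by simp
  thus ?thesis using F_omega_scale[OF sw(2), of "c * \<sigma>" \<psi>] F_omega_scale[OF sw(2), of \<sigma> \<psi>] sw cp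
    by simp
qed

lemma nonneg_add: "nonneg a \<Longrightarrow> nonneg b \<Longrightarrow> nonneg (a + b)"
  by (simp add: nonneg_def)

lemma nonneg_scale: "nonneg a \<Longrightarrow> 0 \<le> c \<Longrightarrow> nonneg (c *\<^sub>R a)"
  by (simp add: nonneg_def)

lemma F_sub:
  fixes \<psi> :: "(real^'n) \<Rightarrow> real"
  assumes psi: "\<psi> \<in> Psi" and a: "nonneg a" and b: "nonneg b"
  shows "Fext \<psi> (a + b) \<le> Fext \<psi> a + Fext \<psi> b"
proof (cases "a = 0 \<or> b = 0")
  case True thus ?thesis by (auto simp: F_zero)
next
  case False
  then obtain \<alpha> p where ap: "0 < \<alpha>" "p \<in> OmegaN" "a = \<alpha> *\<^sub>R p" using nonneg_repr[OF a] by blast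
  obtain \<beta> q where bq: "0 < \<beta>" "q \<in> OmegaN" "b = \<beta> *\<^sub>R q" using nonneg_repr[OF b] False by blast
  define u where "u = \<alpha> / (\<alpha> + \<beta>)"
  define v where "v = \<beta> / (\<alpha> + \<beta>)"
  have ab: "0 < \<alpha> + \<beta>" using ap bq by simp
  have uv: "0 \<le> u" "0 \<le> v" "u + v = 1"
    using ap bq ab by (auto simp: u_def v_def add_divide_distrib[symmetric])
  define r where "r = u *\<^sub>R p + v *\<^sub>R q"
  have conv: "convex_on OmegaN \<psi>" using psi by (simp add: Psi_def)
  have rO: "r \<in> OmegaN" using convex_Omega ap(2) bq(2) uv unfolding r_def convex_def by blast
  have psr: "\<psi> r \<le> u * \<psi> p + v * \<psi> q"
    using conv ap(2) bq(2) uv unfolding convex_on_def r_def by blast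
  have "a + b = (\<alpha> + \<beta>) *\<^sub>R r" using ap bq
    by (simp add: r_def u_def v_def scaleR_add_right)
  hence "Fext \<psi> (a + b) = (\<alpha> + \<beta>) * \<psi> r" using F_omega_scale[OF rO, of "\<alpha> + \<beta>" \<psi>] ap bq by simp
  also have "\<dots> \<le> (\<alpha> + \<beta>) * (u * \<psi> p + v * \<psi> q)" using psr ap bq by (intro mult_left_mono) auto
  also have "\<dots> = ((\<alpha> + \<beta>) * u) * \<psi> p + ((\<alpha> + \<beta>) * v) * \<psi> q"
    by (simp add: algebra_simps)
  also have "\<dots> = \<alpha> * \<psi> p + \<beta> * \<psi> q" using ab by (simp add: u_def v_def)
  also have "\<dots> = Fext \<psi> a + Fext \<psi> b" using F_omega_scale[OF ap(2) ap(1)] F_omega_scale[OF bq(2) bq(1)] ap bq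
    by simp
  finally show ?thesis .
qed

lemma F_conv:
  fixes \<psi> :: "(real^'n) \<Rightarrow> real"
  assumes psi: "\<psi> \<in> Psi" and a: "nonneg a" and b: "nonneg b" and uv: "0 \<le> u" "0 \<le> v"
  shows "Fext \<psi> (u *\<^sub>R a + v *\<^sub>R b) \<le> u * Fext \<psi> a + v * Fext \<psi> b"
  using F_sub[OF psi nonneg_scale[OF a uv(1)] nonneg_scale[OF b uv(2)]] F_hom[OF a uv(1)] F_hom[OF b uv(2)]
  by simp

lemma Omega_one:
  assumes t: "t \<in> OmegaN" and tj: "t$j = 1" and ij: "i \<noteq> j"
  shows "t$i = 0"
proof -
  have "(\<Sum>l\<in>{i,j}. t$l) \<le> (\<Sum>l\<in>UNIV. t$l)"
    by (rule sum_mono2) (auto simp: Omega_nonneg[OF t])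
  hence "t$i + t$j \<le> 1" using ij Omega_sum[OF t] by simp
  thus ?thesis using tj Omega_nonneg[OF t, of i] by simp
qed

lemma F_B2:
  fixes \<psi> :: "(real^'n) \<Rightarrow> real"
  assumes psi: "\<psi> \<in> Psi" and y: "nonneg y"
  shows "Fext \<psi> (\<chi> j. if j = i then 0 else y$j) \<le> Fext \<psi> y"
proof -
  define z where "z = (\<chi> j. if j = i then 0 else y$j)"
  have y0: "\<And>j. 0 \<le> y$j" using y by (simp add: nonneg_def)
  show ?thesis
  proof (cases "y$i = 0")
    case True
    hence "z = y" by (auto simp: z_def vec_eq_iff)
    thus ?thesis by (simp add: z_def)
  next
    case False
    hence yi: "0 < y$i" using y0[of i] by simp
    hence ynz: "y \<noteq> 0" by auto
    show ?thesis
    proof (cases "z = 0")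
      case True thus ?thesis using F_nonneg[OF psi y] by (simp add: z_def F_zero)
    next
      case False
      obtain \<sigma> t where st: "0 < \<sigma>" "t \<in> OmegaN" "y = \<sigma> *\<^sub>R t" using nonneg_repr[OF y ynz] by blast
      have ti: "0 < t$i" using yi st by (simp add: zero_less_mult_iff)
      have lt1: "t$j < 1" for j
      proof (rule ccontr)
        assume "\<not> t$j < 1"
        hence tj: "t$j = 1" using Omega_le1[OF st(2), of j] by simp
        show False
        proof (cases "j = i")
          case True
          have "z = 0"
          proof (unfold z_def vec_eq_iff, intro allI)
            fix l show "(\<chi> j. if j = i then 0 else y$j)$l = 0$l"
              using Omega_one[OF st(2) tj, of l] True st(3) by auto
          qed
          thus False using \<open>z \<noteq> 0\<close> by simp
        next
          case False
          thus False using Omega_one[OF st(2) tj, of i] ti by simp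
        qed
      qed
      hence tOO: "t \<in> OmegaO" using st(2) by (simp add: OmegaO_def)
      define t' where "t' = (\<chi> j. if j = i then 0 else t$j / (1 - t$i))"
      have d: "0 < 1 - t$i" using lt1[of i] by simp
      have "(\<Sum>j\<in>UNIV. t'$j) = (\<Sum>j\<in>UNIV. (if j = i then 0 else t$j) / (1 - t$i))"
        by (rule sum.cong) (auto simp: t'_def)
      also have "\<dots> = (\<Sum>j\<in>UNIV. (if j = i then 0 else t$j)) / (1 - t$i)"
        by (simp add: sum_divide_distrib)
      also have "\<dots> = 1" using sum_if_zero[of i "\<lambda>j. t$j"] Omega_sum[OF st(2)] d by simp
      finally have t's: "(\<Sum>j\<in>UNIV. t'$j) = 1" .
      have "\<forall>j. 0 \<le> t'$j" using Omega_nonneg[OF st(2)] d by (simp add: t'_def)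
      hence t'O: "t' \<in> OmegaN" using t's by (simp add: OmegaN_def)
      have "z = (\<sigma> * (1 - t$i)) *\<^sub>R t'" using st(3) d by (auto simp: z_def t'_def vec_eq_iff)
      hence "Fext \<psi> z = (\<sigma> * (1 - t$i)) * \<psi> t'"
        using F_omega_scale[OF t'O, of "\<sigma> * (1 - t$i)" \<psi>] st d by simp
      also have "\<dots> = \<sigma> * ((1 - t$i) * \<psi> t')" by simp
      also have "\<dots> \<le> \<sigma> * \<psi> t"
        using psi tOO st(1) unfolding Psi_def t'_def by (intro mult_left_mono) auto
      also have "\<dots> = Fext \<psi> y" using F_omega_scale[OF st(2) st(1)] st(3) by simp
      finally show ?thesis by (simp add: z_def)
    qed
  qed
qed

lemma F_mono1:
  fixes \<psi> :: "(real^'n) \<Rightarrow> real"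
  assumes psi: "\<psi> \<in> Psi" and y: "nonneg y" and \<delta>: "0 \<le> \<delta>" "\<delta> \<le> y$i"
  shows "Fext \<psi> (y - \<delta> *\<^sub>R axis i 1) \<le> Fext \<psi> y"
proof (cases "y$i = 0")
  case True thus ?thesis using \<delta> by simp
next
  case False
  have y0: "\<And>j. 0 \<le> y$j" using y by (simp add: nonneg_def)
  have yi: "0 < y$i" using False y0[of i] by simp
  define l where "l = \<delta> / y$i"
  have l: "0 \<le> l" "l \<le> 1" using \<delta> yi by (auto simp: l_def field_simps)
  define z where "z = (\<chi> j. if j = i then 0 else y$j)"
  have z: "nonneg z" using y0 by (simp add: nonneg_def z_def)
  have "y - \<delta> *\<^sub>R axis i 1 = l *\<^sub>R z + (1 - l) *\<^sub>R y"
    using yi by (auto simp: vec_eq_iff z_def axis_def l_def field_simps)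
  hence "Fext \<psi> (y - \<delta> *\<^sub>R axis i 1) \<le> l * Fext \<psi> z + (1 - l) * Fext \<psi> y"
    using F_conv[OF psi z y, of l "1 - l"] l by simp
  also have "\<dots> \<le> l * Fext \<psi> y + (1 - l) * Fext \<psi> y"
    using F_B2[OF psi y, of i] l by (simp add: z_def mult_left_mono)
  finally show ?thesis by (simp add: algebra_simps)
qed

lemma F_mono:
  fixes \<psi> :: "(real^'n) \<Rightarrow> real"
  assumes psi: "\<psi> \<in> Psi" and c: "nonneg c" and cd: "\<And>i. c$i \<le> d$i"
  shows "Fext \<psi> c \<le> Fext \<psi> d"
proof -
  have c0: "\<And>i. 0 \<le> c$i" using c by (simp add: nonneg_def)
  have "finite S \<Longrightarrow> Fext \<psi> (\<chi> j. if j \<in> S then c$j else d$j) \<le> Fext \<psi> d" for S :: "'n set"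
  proof (induction S rule: finite_induct)
    case empty thus ?case by simp
  next
    case (insert i S)
    define w where "w = (\<chi> j. if j \<in> S then c$j else d$j)"
    have w: "nonneg w" using c0 cd by (auto simp: nonneg_def w_def intro: order_trans)
    have wi: "w$i = d$i" using insert(2) by (simp add: w_def)
    have "(\<chi> j. if j \<in> insert i S then c$j else d$j) = w - (d$i - c$i) *\<^sub>R axis i 1"
      using insert(2) by (auto simp: vec_eq_iff w_def axis_def)
    moreover have "Fext \<psi> (w - (d$i - c$i) *\<^sub>R axis i 1) \<le> Fext \<psi> w"
      using cd[of i] c0[of i] wi by (intro F_mono1[OF psi w]) auto
    ultimately show ?case using insert(3) by (simp add: w_def)
  qed
  from this[of UNIV] show ?thesis by simp
qed

definition pplus :: "real^'n \<Rightarrow> real^'n" where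
  "pplus x = (\<chi> i. max (x$i) 0)"

lemma pplus_nonneg: "nonneg (pplus x)"
  by (simp add: nonneg_def pplus_def)

lemma sublin_Fp:
  fixes \<psi> :: "(real^'n) \<Rightarrow> real"
  assumes psi: "\<psi> \<in> Psi"
  shows "sublin (\<lambda>x. Fext \<psi> (pplus x))"
  unfolding sublin_def
proof (intro conjI allI impI)
  fix x y :: "real^'n"
  have "Fext \<psi> (pplus (x + y)) \<le> Fext \<psi> (pplus x + pplus y)"
    by (rule F_mono[OF psi pplus_nonneg]) (simp add: pplus_def)
  also have "\<dots> \<le> Fext \<psi> (pplus x) + Fext \<psi> (pplus y)"
    by (rule F_sub[OF psi pplus_nonneg pplus_nonneg])
  finally show "Fext \<psi> (pplus (x + y)) \<le> Fext \<psi> (pplus x) + Fext \<psi> (pplus y)" .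
next
  fix c :: real and x :: "real^'n"
  assume c: "0 \<le> c"
  have mx: "max (c * a) 0 = c * max a 0" for a :: real
  proof (cases "a \<le> 0")
    case True
    hence "c * a \<le> 0" using c by (simp add: mult_nonneg_nonpos)
    thus ?thesis using True by (simp add: max_absorb2)
  next
    case False
    hence "0 \<le> c * a" using c by simp
    thus ?thesis using False by (simp add: max_absorb1)
  qed
  have "pplus (c *\<^sub>R x) = c *\<^sub>R pplus x"
    by (simp add: pplus_def vec_eq_iff mx)
  thus "Fext \<psi> (pplus (c *\<^sub>R x)) = c * Fext \<psi> (pplus x)"
    using F_hom[OF pplus_nonneg c] by simp
qed

lemma linear_repr:
  fixes f :: "real^'n \<Rightarrow> real"
  assumes "linear f"
  shows "f x = (\<chi> i. f (axis i 1)) \<bullet> x"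
proof -
  have "x = (\<Sum>i\<in>UNIV. x$i *\<^sub>R axis i 1)"
    using basis_expansion[of x] by (simp add: scalar_mult_eq_scaleR)
  hence "f x = (\<Sum>i\<in>UNIV. f (x$i *\<^sub>R axis i 1))"
    using linear_sum[OF assms] by metis
  also have "\<dots> = (\<Sum>i\<in>UNIV. x$i * f (axis i 1))"
    using linear_scale[OF assms] by simp
  finally show ?thesis by (simp add: inner_vec_real mult.commute)
qed

lemma part_v:
  fixes \<psi> :: "(real^'n) \<Rightarrow> real"
  assumes psi: "\<psi> \<in> Psi" and t: "t \<in> OmegaN"
  shows "\<psi> t = (SUP s\<in>OmegaN. (t \<bullet> s) / psi_star \<psi> s)"
proof -
  let ?p = "\<lambda>x. Fext \<psi> (pplus x)"
  obtain f where lin: "linear f" and fle: "\<forall>x. f x \<le> ?p x" and ft: "f t = ?p t"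
    using hahn_banach_sublin[OF sublin_Fp[OF psi], of t] by blast
  have pt: "pplus t = t" using Omega_nonneg[OF t] by (simp add: pplus_def vec_eq_iff)
  have ftp: "f t = \<psi> t" using ft pt F_omega[OF t] by simp
  define g where "g = (\<chi> i. f (axis i 1))"
  have fg: "\<And>x. f x = g \<bullet> x" unfolding g_def by (rule linear_repr[OF lin])
  have g0: "0 \<le> g$i" for i
  proof -
    have "pplus (- axis i 1) = 0" by (simp add: pplus_def vec_eq_iff axis_def)
    hence "f (- axis i 1) \<le> 0" using fle F_zero by metis
    thus ?thesis using linear_neg[OF lin, of "axis i 1"] by (simp add: g_def)
  qed
  have gle: "g \<bullet> t' \<le> \<psi> t'" if "t' \<in> OmegaN" for t'
  proof -
    have "pplus t' = t'" using Omega_nonneg[OF that] by (simp add: pplus_def vec_eq_iff)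
    thus ?thesis using fle fg F_omega[OF that] by metis
  qed
  have gt: "g \<bullet> t = \<psi> t" using ftp fg by simp
  define G where "G = (\<Sum>i\<in>UNIV. g$i)"
  have "g \<bullet> t \<le> G" unfolding G_def inner_vec_real
    by (rule sum_mono) (rule mult_right_le_one_le[OF g0 Omega_nonneg[OF t] Omega_le1[OF t]])
  hence Gp: "0 < G" using gt psi_lb(2)[OF psi t] by simp
  define s where "s = (1 / G) *\<^sub>R g"
  have "(\<Sum>i\<in>UNIV. s$i) = (1 / G) * G" unfolding s_def G_def by (simp add: sum_distrib_left)
  hence sO: "s \<in> OmegaN" using Gp g0 by (simp add: OmegaN_def s_def)
  have Ds: "psi_star \<psi> s \<le> 1 / G"
  proof (rule D_least)
    fix t' :: "real^'n" assume t': "t' \<in> OmegaN"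
    have "t' \<bullet> s = (g \<bullet> t') / G" by (simp add: s_def inner_commute)
    also have "\<dots> \<le> \<psi> t' / G" using gle[OF t'] Gp by (simp add: divide_right_mono)
    finally show "(t' \<bullet> s) / \<psi> t' \<le> 1 / G" using psi_lb(2)[OF psi t'] Gp
      by (simp add: divide_le_eq field_simps)
  qed
  have ts: "t \<bullet> s = \<psi> t / G" using gt by (simp add: s_def inner_commute)
  have bnd: "(t \<bullet> s') / psi_star \<psi> s' \<le> \<psi> t" if "s' \<in> OmegaN" for s'
    using D_mul[OF psi t, of s'] D_pos[OF psi that] by (simp add: divide_le_eq)
  have bdd: "bdd_above ((\<lambda>s. (t \<bullet> s) / psi_star \<psi> s) ` OmegaN)"
    using bnd by (intro bdd_aboveI2) auto
  show ?thesis
  proof (rule antisym)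
    have Dsp: "0 < psi_star \<psi> s" by (rule D_pos[OF psi sO])
    have "\<psi> t = (\<psi> t / G) / (1 / G)" using Gp by simp
    also have "\<dots> \<le> (t \<bullet> s) / psi_star \<psi> s"
      unfolding ts using Ds Dsp psi_lb(2)[OF psi t] Gp by (intro divide_left_mono) auto
    also have "\<dots> \<le> (SUP s\<in>OmegaN. (t \<bullet> s) / psi_star \<psi> s)"
      using bdd sO by (intro cSUP_upper) auto
    finally show "\<psi> t \<le> (SUP s\<in>OmegaN. (t \<bullet> s) / psi_star \<psi> s)" .
    show "(SUP s\<in>OmegaN. (t \<bullet> s) / psi_star \<psi> s) \<le> \<psi> t"
      using Omega_ne bnd by (intro cSUP_least) auto
  qed
qed



definition nv :: "('b::real_normed_vector)^'n \<Rightarrow> real^'n" where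
  "nv f = (\<chi> i. norm (f$i))"

lemma nv_nonneg: "nonneg (nv f)"
  by (simp add: nonneg_def nv_def)

lemma N_eq: "psi_dual_norm \<psi> f = psi_star \<psi> (nv f)"
  by (simp add: dual_eq nv_def)

lemma exists_unit_dual:
  assumes "\<exists>x::'a::real_normed_vector. x \<noteq> 0"
  shows "\<exists>e::'a \<Rightarrow>\<^sub>L real. norm e = 1"
proof -
  obtain x0 :: 'a where x0: "x0 \<noteq> 0" using assms by blast
  have "sublin (norm :: 'a \<Rightarrow> real)"
    unfolding sublin_def by (simp add: norm_triangle_ineq)
  then obtain f where lin: "linear f" and fle: "\<forall>x. f x \<le> norm (x::'a)" and fx0: "f x0 = norm x0"
    using hahn_banach_sublin by blast
  have bl: "bounded_linear f"
  proof (rule bounded_linear_intro[where K = 1])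
    show "f (x + y) = f x + f y" for x y using linear_add[OF lin] .
    show "f (r *\<^sub>R x) = r *\<^sub>R f x" for r x using linear_scale[OF lin] .
    show "norm (f x) \<le> norm x * 1" for x
    proof -
      have "f (- x) \<le> norm (- x)" using fle by blast
      hence "- f x \<le> norm x" using linear_neg[OF lin, of x] by simp
      thus ?thesis using fle[rule_format, of x] by simp
    qed
  qed
  define E where "E = Blinfun f"
  have Ea: "blinfun_apply E = f" unfolding E_def by (rule bounded_linear_Blinfun_apply[OF bl])
  have "E \<noteq> 0"
  proof
    assume "E = 0"
    hence "f x0 = 0" using Ea by (metis zero_blinfun.rep_eq)
    thus False using fx0 x0 by simp
  qed
  hence "0 < norm E" by simp
  hence "norm ((1 / norm E) *\<^sub>R E) = 1" by simp
  thus ?thesis by blast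
qed

lemma N_is_norm:
  fixes \<psi> :: "(real^'n) \<Rightarrow> real"
  assumes psi: "\<psi> \<in> Psi"
  shows "is_norm (psi_dual_norm \<psi> :: ('a::real_normed_vector \<Rightarrow>\<^sub>L real)^'n \<Rightarrow> real)"
  unfolding is_norm_def
proof (intro conjI allI)
  fix x :: "('a \<Rightarrow>\<^sub>L real)^'n"
  show "psi_dual_norm \<psi> x = 0 \<longleftrightarrow> x = 0"
  proof
    assume "psi_dual_norm \<psi> x = 0"
    hence "norm (x$i) \<le> 0" for i using D_ge_comp[OF psi, of "nv x" i] by (simp add: N_eq nv_def)
    thus "x = 0" by (simp add: vec_eq_iff)
  next
    assume "x = 0"
    hence "nv x = 0" by (simp add: nv_def vec_eq_iff)
    thus "psi_dual_norm \<psi> x = 0" by (simp add: N_eq D_zero[OF psi])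
  qed
next
  fix x y :: "('a \<Rightarrow>\<^sub>L real)^'n"
  have "psi_star \<psi> (nv (x + y)) \<le> psi_star \<psi> (nv x + nv y)"
    by (rule D_mono[OF psi]) (simp add: nv_def norm_triangle_ineq)
  also have "\<dots> \<le> psi_star \<psi> (nv x) + psi_star \<psi> (nv y)" by (rule D_add[OF psi])
  finally show "psi_dual_norm \<psi> (x + y) \<le> psi_dual_norm \<psi> x + psi_dual_norm \<psi> y" by (simp add: N_eq)
next
  fix c :: real and x :: "('a \<Rightarrow>\<^sub>L real)^'n"
  have "nv (c *\<^sub>R x) = \<bar>c\<bar> *\<^sub>R nv x" by (simp add: nv_def vec_eq_iff)
  thus "psi_dual_norm \<psi> (c *\<^sub>R x) = \<bar>c\<bar> * psi_dual_norm \<psi> x"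
    by (simp add: N_eq D_scale[OF psi])
qed

lemma N_sign:
  fixes \<psi> :: "(real^'n) \<Rightarrow> real"
  assumes "\<forall>i. \<epsilon> i = 1 \<or> \<epsilon> i = -1"
  shows "psi_dual_norm \<psi> (\<chi> i. \<epsilon> i *\<^sub>R (x::('a::real_normed_vector \<Rightarrow>\<^sub>L real)^'n)$i) = psi_dual_norm \<psi> x"
proof -
  have "\<bar>\<epsilon> i\<bar> = 1" for i using assms by (metis abs_1 abs_minus_cancel)
  hence "nv (\<chi> i. \<epsilon> i *\<^sub>R x$i) = nv x" by (simp add: nv_def vec_eq_iff)
  thus ?thesis by (simp add: N_eq)
qed

lemma N_compat:
  fixes \<psi> :: "(real^'n) \<Rightarrow> real"
  assumes psi: "\<psi> \<in> Psi"
  shows "psi_dual_norm \<psi> (\<chi> j. if j = i then v else (0::'a::real_normed_vector \<Rightarrow>\<^sub>L real)) = norm v"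
proof -
  have "nv (\<chi> j. if j = i then v else (0::'a \<Rightarrow>\<^sub>L real)) = norm v *\<^sub>R axis i 1"
    by (simp add: nv_def vec_eq_iff axis_def)
  thus ?thesis by (simp add: N_eq D_scale[OF psi] D_axis[OF psi])
qed

lemma norm_strict_mu:
  fixes N :: "'v::real_vector \<Rightarrow> real"
  assumes N: "is_norm N" and sc: "strictly_convex_norm N"
    and x: "N x = 1" and y: "N y = 1" and xy: "x \<noteq> y" and mu: "0 < \<mu>" "\<mu> < 1"
  shows "N (\<mu> *\<^sub>R x + (1 - \<mu>) *\<^sub>R y) < 1"
proof -
  have tri: "N (a + b) \<le> N a + N b" for a b using N by (simp add: is_norm_def)
  have hom: "N (c *\<^sub>R a) = \<bar>c\<bar> * N a" for c a using N by (simp add: is_norm_def)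
  have gen: "N (m *\<^sub>R a + (1 - m) *\<^sub>R b) < 1"
    if a: "N a = 1" and b: "N b = 1" and ab: "a \<noteq> b" and m: "0 < m" "m \<le> 1/2" for a b m
  proof -
    have mid: "N ((1/2) *\<^sub>R (a + b)) < 1" using sc a b ab by (simp add: strictly_convex_norm_def)
    have e4: "(m * 2) *\<^sub>R b = m *\<^sub>R b + m *\<^sub>R b" by (metis mult_2_right scaleR_add_left)
    have "m *\<^sub>R a + (1 - m) *\<^sub>R b = (2 * m) *\<^sub>R ((1/2) *\<^sub>R (a + b)) + (1 - 2 * m) *\<^sub>R b"
      by (simp add: algebra_simps e4)
    hence "N (m *\<^sub>R a + (1 - m) *\<^sub>R b) \<le> (2 * m) * N ((1/2) *\<^sub>R (a + b)) + (1 - 2 * m) * N b"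
      using tri[of "(2 * m) *\<^sub>R ((1/2) *\<^sub>R (a + b))" "(1 - 2 * m) *\<^sub>R b"] hom m by simp
    also have "\<dots> < (2 * m) * 1 + (1 - 2 * m) * 1"
      using mid m b by simp
    finally show ?thesis by simp
  qed
  show ?thesis
  proof (cases "\<mu> \<le> 1/2")
    case True thus ?thesis using gen[OF x y xy mu(1)] by simp
  next
    case False
    have "N ((1 - \<mu>) *\<^sub>R y + (1 - (1 - \<mu>)) *\<^sub>R x) < 1"
      by (rule gen) (use y x xy False mu in auto)
    thus ?thesis by (simp add: add.commute)
  qed
qed

lemma nv_scal:
  fixes e :: "'b::real_normed_vector"
  assumes "norm e = 1" "nonneg c"
  shows "nv (\<chi> i. c$i *\<^sub>R e) = c"
  using assms by (simp add: nv_def vec_eq_iff nonneg_def)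

lemma Omega_nonneg': "s \<in> OmegaN \<Longrightarrow> nonneg s"
  by (simp add: nonneg_def Omega_nonneg)

lemma dir_forward:
  fixes \<psi> :: "(real^'n) \<Rightarrow> real"
  assumes psi: "\<psi> \<in> Psi" and X: "\<exists>x::'a::real_normed_vector. x \<noteq> 0"
    and sc: "strictly_convex_norm (psi_dual_norm \<psi> :: ('a \<Rightarrow>\<^sub>L real)^'n \<Rightarrow> real)"
  shows "psi_star \<psi> \<in> Psi_sc \<and> strictly_convex_norm (norm :: ('a \<Rightarrow>\<^sub>L real) \<Rightarrow> real)"
proof
  let ?N = "psi_dual_norm \<psi> :: ('a \<Rightarrow>\<^sub>L real)^'n \<Rightarrow> real"
  have Nn: "is_norm ?N" by (rule N_is_norm[OF psi])
  show "strictly_convex_norm (norm :: ('a \<Rightarrow>\<^sub>L real) \<Rightarrow> real)"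
    unfolding strictly_convex_norm_def
  proof (intro allI impI)
    fix x y :: "'a \<Rightarrow>\<^sub>L real"
    assume h: "norm x = 1 \<and> norm y = 1 \<and> x \<noteq> y"
    fix i0 :: 'n
    define E where "E = (\<lambda>v::'a \<Rightarrow>\<^sub>L real. (\<chi> j. if j = i0 then v else 0) :: ('a \<Rightarrow>\<^sub>L real)^'n)"
    have NE: "?N (E v) = norm v" for v unfolding E_def by (rule N_compat[OF psi])
    have "E x \<noteq> E y" using h by (auto simp: E_def vec_eq_iff)
    hence "?N ((1/2) *\<^sub>R (E x + E y)) < 1" using sc h NE by (simp add: strictly_convex_norm_def)
    moreover have "(1/2) *\<^sub>R (E x + E y) = E ((1/2) *\<^sub>R (x + y))" by (simp add: E_def vec_eq_iff)
    ultimately show "norm ((1/2) *\<^sub>R (x + y)) < 1" using NE by simp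
  qed
  obtain e :: "'a \<Rightarrow>\<^sub>L real" where e: "norm e = 1" using exists_unit_dual[OF X] by blast
  have enz: "e \<noteq> 0" using e by auto
  have strict: "psi_star \<psi> (u *\<^sub>R x + (1 - u) *\<^sub>R y) < u * psi_star \<psi> x + (1 - u) * psi_star \<psi> y"
    if x: "x \<in> OmegaN" and y: "y \<in> OmegaN" and xy: "x \<noteq> y" and u: "0 < u" "u < 1" for x y u
  proof -
    define \<alpha> where "\<alpha> = psi_star \<psi> x"
    define \<beta> where "\<beta> = psi_star \<psi> y"
    have \<alpha>: "0 < \<alpha>" using D_pos[OF psi x] by (simp add: \<alpha>_def)
    have \<beta>: "0 < \<beta>" using D_pos[OF psi y] by (simp add: \<beta>_def)
    define V where "V = (\<lambda>c::real^'n. (\<chi> i. c$i *\<^sub>R e) :: ('a \<Rightarrow>\<^sub>L real)^'n)"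
    have NV: "?N (V c) = psi_star \<psi> c" if "nonneg c" for c
      using nv_scal[OF e that] by (simp add: N_eq V_def)
    have nx: "nonneg ((1/\<alpha>) *\<^sub>R x)" "nonneg ((1/\<beta>) *\<^sub>R y)"
      using \<alpha> \<beta> Omega_nonneg'[OF x] Omega_nonneg'[OF y] by (auto intro: nonneg_scale)
    have N1: "?N (V ((1/\<alpha>) *\<^sub>R x)) = 1" using NV[OF nx(1)] D_scale[OF psi, of "1/\<alpha>" x] \<alpha>
      by (simp add: \<alpha>_def)
    have N2: "?N (V ((1/\<beta>) *\<^sub>R y)) = 1" using NV[OF nx(2)] D_scale[OF psi, of "1/\<beta>" y] \<beta>
      by (simp add: \<beta>_def)
    have Vne: "V ((1/\<alpha>) *\<^sub>R x) \<noteq> V ((1/\<beta>) *\<^sub>R y)"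
    proof
      assume "V ((1/\<alpha>) *\<^sub>R x) = V ((1/\<beta>) *\<^sub>R y)"
      hence c: "x$i / \<alpha> = y$i / \<beta>" for i using enz by (simp add: V_def vec_eq_iff)
      hence "(\<Sum>i\<in>UNIV. x$i) / \<alpha> = (\<Sum>i\<in>UNIV. y$i) / \<beta>" by (simp add: sum_divide_distrib)
      hence "\<alpha> = \<beta>" using Omega_sum[OF x] Omega_sum[OF y] \<alpha> \<beta> by (simp add: field_simps)
      hence "x = y" using c \<alpha> by (simp add: vec_eq_iff)
      thus False using xy by simp
    qed
    define K where "K = u * \<alpha> + (1 - u) * \<beta>"
    have K: "0 < K" using u \<alpha> \<beta> by (simp add: K_def add_pos_pos)
    define \<mu> where "\<mu> = u * \<alpha> / K"
    have mu: "0 < \<mu>" "\<mu> < 1" using u \<alpha> \<beta> K by (auto simp: \<mu>_def K_def field_simps)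
    have "?N (\<mu> *\<^sub>R V ((1/\<alpha>) *\<^sub>R x) + (1 - \<mu>) *\<^sub>R V ((1/\<beta>) *\<^sub>R y)) < 1"
      by (rule norm_strict_mu[OF Nn sc N1 N2 Vne mu])
    moreover have "\<mu> *\<^sub>R V ((1/\<alpha>) *\<^sub>R x) + (1 - \<mu>) *\<^sub>R V ((1/\<beta>) *\<^sub>R y)
        = V ((1/K) *\<^sub>R (u *\<^sub>R x + (1 - u) *\<^sub>R y))"
    proof -
      have m1: "\<mu> / \<alpha> = u / K" using \<alpha> K by (simp add: \<mu>_def)
      have "\<mu> + (1 - u) * \<beta> / K = (u * \<alpha> + (1 - u) * \<beta>) / K" by (simp add: \<mu>_def add_divide_distrib)
      also have "\<dots> = 1" using K by (simp add: K_def[symmetric])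
      finally have "1 - \<mu> = (1 - u) * \<beta> / K" by simp
      hence m2: "(1 - \<mu>) / \<beta> = (1 - u) / K" using \<beta> by simp
      have key: "\<mu> * (x$i / \<alpha>) + (1 - \<mu>) * (y$i / \<beta>) = (u * x$i + (1 - u) * y$i) / K" for i
      proof -
        have "\<mu> * (x$i / \<alpha>) + (1 - \<mu>) * (y$i / \<beta>) = (\<mu> / \<alpha>) * x$i + ((1 - \<mu>) / \<beta>) * y$i" by simp
        also have "\<dots> = (u / K) * x$i + ((1 - u) / K) * y$i" by (simp only: m1 m2)
        also have "\<dots> = (u * x$i + (1 - u) * y$i) / K" by (simp add: add_divide_distrib)
        finally show ?thesis .
      qed
      show ?thesis unfolding vec_eq_iff
      proof
        fix i
        have "(\<mu> *\<^sub>R V ((1/\<alpha>) *\<^sub>R x) + (1 - \<mu>) *\<^sub>R V ((1/\<beta>) *\<^sub>R y))$i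
            = (\<mu> * (x$i / \<alpha>)) *\<^sub>R e + ((1 - \<mu>) * (y$i / \<beta>)) *\<^sub>R e"
          by (simp add: V_def)
        also have "\<dots> = (\<mu> * (x$i / \<alpha>) + (1 - \<mu>) * (y$i / \<beta>)) *\<^sub>R e"
          by (rule scaleR_add_left[symmetric])
        also have "\<dots> = ((u * x$i + (1 - u) * y$i) / K) *\<^sub>R e" by (simp only: key)
        also have "\<dots> = (V ((1/K) *\<^sub>R (u *\<^sub>R x + (1 - u) *\<^sub>R y)))$i"
          by (simp add: V_def)
        finally show "(\<mu> *\<^sub>R V ((1/\<alpha>) *\<^sub>R x) + (1 - \<mu>) *\<^sub>R V ((1/\<beta>) *\<^sub>R y))$i
            = (V ((1/K) *\<^sub>R (u *\<^sub>R x + (1 - u) *\<^sub>R y)))$i" .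
      qed
    qed
    moreover have "nonneg ((1/K) *\<^sub>R (u *\<^sub>R x + (1 - u) *\<^sub>R y))"
      using K u Omega_nonneg'[OF x] Omega_nonneg'[OF y] by (simp add: nonneg_def)
    ultimately have "psi_star \<psi> ((1/K) *\<^sub>R (u *\<^sub>R x + (1 - u) *\<^sub>R y)) < 1" using NV by simp
    hence "(1/K) * psi_star \<psi> (u *\<^sub>R x + (1 - u) *\<^sub>R y) < 1" using D_scale[OF psi, of "1/K"] K by simp
    hence "psi_star \<psi> (u *\<^sub>R x + (1 - u) *\<^sub>R y) < K" using K by (simp add: field_simps)
    thus ?thesis by (simp add: K_def \<alpha>_def \<beta>_def)
  qed
  have "psi_star \<psi> \<in> Psi" by (rule part_i[OF psi])
  moreover have "convex_on OmegaN (psi_star \<psi>)" using calculation by (simp add: Psi_def)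
  ultimately show "psi_star \<psi> \<in> Psi_sc"
    using strict by (auto simp: Psi_sc_def strictly_convex_fun_on_def)
qed

lemma S1:
  fixes \<psi> :: "(real^'n) \<Rightarrow> real"
  assumes psi: "\<psi> \<in> Psi" and scf: "strictly_convex_fun_on OmegaN (psi_star \<psi>)"
    and a: "nonneg a" and b: "nonneg b" and Da: "psi_star \<psi> a = 1" and Db: "psi_star \<psi> b = 1"
    and ab: "a \<noteq> b"
  shows "psi_star \<psi> ((1/2) *\<^sub>R (a + b)) < 1"
proof -
  have "a \<noteq> 0" using Da D_zero[OF psi] by auto
  then obtain \<alpha> p where ap: "0 < \<alpha>" "p \<in> OmegaN" "a = \<alpha> *\<^sub>R p" using nonneg_repr[OF a] by blast
  have "b \<noteq> 0" using Db D_zero[OF psi] by auto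
  then obtain \<beta> q where bq: "0 < \<beta>" "q \<in> OmegaN" "b = \<beta> *\<^sub>R q" using nonneg_repr[OF b] by blast
  have Dp: "\<alpha> * psi_star \<psi> p = 1" using Da ap D_scale[OF psi, of \<alpha> p] by simp
  have Dq: "\<beta> * psi_star \<psi> q = 1" using Db bq D_scale[OF psi, of \<beta> q] by simp
  have pq: "p \<noteq> q"
  proof
    assume "p = q"
    hence "\<alpha> * psi_star \<psi> p = \<beta> * psi_star \<psi> p" using Dp Dq by simp
    hence "\<alpha> = \<beta>" using D_pos[OF psi ap(2)] by simp
    thus False using ab ap bq \<open>p = q\<close> by simp
  qed
  have abp: "0 < \<alpha> + \<beta>" using ap bq by simp
  define u where "u = \<alpha> / (\<alpha> + \<beta>)"
  have u: "0 < u" "u < 1" using ap bq abp by (auto simp: u_def field_simps)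
  have u1: "1 - u = \<beta> / (\<alpha> + \<beta>)" using abp by (simp add: u_def field_simps)
  have "psi_star \<psi> (u *\<^sub>R p + (1 - u) *\<^sub>R q) < u * psi_star \<psi> p + (1 - u) * psi_star \<psi> q"
    using scf ap(2) bq(2) pq u unfolding strictly_convex_fun_on_def by blast
  also have "\<dots> = 2 / (\<alpha> + \<beta>)"
  proof -
    have "u * psi_star \<psi> p = 1 / (\<alpha> + \<beta>)" using Dp unfolding u_def by (simp add: field_simps)
    moreover have "(1 - u) * psi_star \<psi> q = 1 / (\<alpha> + \<beta>)" using Dq unfolding u1 by (simp add: field_simps)
    ultimately show ?thesis by simp
  qed
  finally have lt: "psi_star \<psi> (u *\<^sub>R p + (1 - u) *\<^sub>R q) < 2 / (\<alpha> + \<beta>)" .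
  have "(1/2) *\<^sub>R (a + b) = ((\<alpha> + \<beta>) / 2) *\<^sub>R (u *\<^sub>R p + (1 - u) *\<^sub>R q)"
  proof -
    have s1: "((\<alpha> + \<beta>) / 2) * u = \<alpha> / 2" using abp by (simp add: u_def field_simps)
    have s2: "((\<alpha> + \<beta>) / 2) * (1 - u) = \<beta> / 2" using abp by (simp add: u1 field_simps)
    have "((\<alpha> + \<beta>) / 2) *\<^sub>R (u *\<^sub>R p + (1 - u) *\<^sub>R q)
        = (((\<alpha> + \<beta>) / 2) * u) *\<^sub>R p + (((\<alpha> + \<beta>) / 2) * (1 - u)) *\<^sub>R q"
      by (simp only: scaleR_add_right scaleR_scaleR)
    also have "\<dots> = (\<alpha> / 2) *\<^sub>R p + (\<beta> / 2) *\<^sub>R q" by (simp only: s1 s2)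
    also have "\<dots> = (1/2) *\<^sub>R (a + b)" using ap bq by (simp add: scaleR_add_right)
    finally show ?thesis by simp
  qed
  hence "psi_star \<psi> ((1/2) *\<^sub>R (a + b)) = ((\<alpha> + \<beta>) / 2) * psi_star \<psi> (u *\<^sub>R p + (1 - u) *\<^sub>R q)"
    using D_scale[OF psi] abp by simp
  also have "\<dots> < ((\<alpha> + \<beta>) / 2) * (2 / (\<alpha> + \<beta>))"
    by (rule mult_strict_left_mono[OF lt]) (use abp in simp)
  also have "\<dots> = 1" using abp by simp
  finally show ?thesis .
qed

lemma S2:
  fixes \<psi> :: "(real^'n) \<Rightarrow> real"
  assumes psi: "\<psi> \<in> Psi" and scf: "strictly_convex_fun_on OmegaN (psi_star \<psi>)"
    and c: "nonneg c" and cd: "\<And>i. c$i \<le> d$i" and ne: "c \<noteq> d" and Dd: "psi_star \<psi> d = 1"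
  shows "psi_star \<psi> c < 1"
proof (rule ccontr)
  assume "\<not> psi_star \<psi> c < 1"
  moreover have "psi_star \<psi> c \<le> 1" using D_mono[OF psi cd] Dd by simp
  ultimately have Dc: "psi_star \<psi> c = 1" by simp
  have d: "nonneg d" using c cd by (auto simp: nonneg_def intro: order_trans)
  have "psi_star \<psi> c \<le> psi_star \<psi> ((1/2) *\<^sub>R (c + d))"
    by (rule D_mono[OF psi]) (simp add: cd)
  hence "1 \<le> psi_star \<psi> ((1/2) *\<^sub>R (c + d))" using Dc by simp
  moreover have "psi_star \<psi> ((1/2) *\<^sub>R (c + d)) < 1" by (rule S1[OF psi scf c d Dc Dd ne])
  ultimately show False by simp
qed

lemma dir_backward:
  fixes \<psi> :: "(real^'n) \<Rightarrow> real"
  assumes psi: "\<psi> \<in> Psi" and scf: "strictly_convex_fun_on OmegaN (psi_star \<psi>)"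
    and scX: "strictly_convex_norm (norm :: ('a::real_normed_vector \<Rightarrow>\<^sub>L real) \<Rightarrow> real)"
  shows "strictly_convex_norm (psi_dual_norm \<psi> :: ('a \<Rightarrow>\<^sub>L real)^'n \<Rightarrow> real)"
  unfolding strictly_convex_norm_def
proof (intro allI impI)
  fix f g :: "('a \<Rightarrow>\<^sub>L real)^'n"
  assume h: "psi_dual_norm \<psi> f = 1 \<and> psi_dual_norm \<psi> g = 1 \<and> f \<noteq> g"
  define a where "a = nv f"
  define b where "b = nv g"
  define c where "c = nv ((1/2) *\<^sub>R (f + g))"
  have Da: "psi_star \<psi> a = 1" and Db: "psi_star \<psi> b = 1" using h by (simp_all add: N_eq a_def b_def)
  have an: "nonneg a" "nonneg b" "nonneg c" by (simp_all add: a_def b_def c_def nv_nonneg)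
  have cle: "c$i \<le> ((1/2) *\<^sub>R (a + b))$i" for i
  proof -
    have "norm ((1/2) *\<^sub>R (f$i + g$i)) = (1/2) * norm (f$i + g$i)" by simp
    also have "\<dots> \<le> (1/2) * (norm (f$i) + norm (g$i))" by (simp add: norm_triangle_ineq)
    finally show ?thesis by (simp add: a_def b_def c_def nv_def)
  qed
  have Dmid: "psi_star \<psi> ((1/2) *\<^sub>R (a + b)) \<le> 1"
    using D_scale[OF psi, of "1/2" "a + b"] D_add[OF psi, of a b] Da Db by simp
  have Dcm: "psi_star \<psi> c \<le> psi_star \<psi> ((1/2) *\<^sub>R (a + b))" by (rule D_mono[OF psi cle])
  have "psi_star \<psi> c < 1"
  proof (cases "a = b")
    case False
    thus ?thesis using S1[OF psi scf an(1) an(2) Da Db] Dcm by simp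
  next
    case True
    hence mid: "(1/2) *\<^sub>R (a + b) = a" by (simp add: scaleR_add_right[symmetric])
    show ?thesis
    proof (cases "c = a")
      case False
      thus ?thesis using S2[OF psi scf an(3) _ False Da] cle mid by simp
    next
      case ca: True
      obtain i where fi: "f$i \<noteq> g$i" using h by (auto simp: vec_eq_iff)
      define r where "r = norm (f$i)"
      have rg: "norm (g$i) = r" using True by (simp add: a_def b_def nv_def vec_eq_iff r_def)
      have rm: "norm ((1/2) *\<^sub>R (f$i + g$i)) = r" using ca by (simp add: a_def c_def nv_def vec_eq_iff r_def)
      have "r \<noteq> 0"
      proof
        assume "r = 0"
        hence "f$i = 0" "g$i = 0" using rg by (auto simp: r_def)
        thus False using fi by simp
      qed
      hence rp: "0 < r" by (simp add: r_def)
      define x where "x = (1/r) *\<^sub>R f$i"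
      define y where "y = (1/r) *\<^sub>R g$i"
      have "norm x = 1" "norm y = 1" using rp rg by (simp_all add: x_def y_def r_def)
      moreover have "x \<noteq> y" using fi rp by (simp add: x_def y_def)
      ultimately have "norm ((1/2) *\<^sub>R (x + y)) < 1" using scX by (simp add: strictly_convex_norm_def)
      moreover have "(1/2) *\<^sub>R (x + y) = (1/r) *\<^sub>R ((1/2) *\<^sub>R (f$i + g$i))"
        by (simp add: x_def y_def scaleR_add_right mult.commute)
      ultimately have "(1/r) * r < 1" using rm rp by simp
      thus ?thesis using rp by simp
    qed
  qed
  thus "psi_dual_norm \<psi> ((1/2) *\<^sub>R (f + g)) < 1" by (simp add: N_eq c_def)
qed

lemma part_ii:
  fixes \<psi> :: "(real^'n) \<Rightarrow> real"
  assumes psi: "\<psi> \<in> Psi" and X: "\<exists>x::'a::real_normed_vector. x \<noteq> 0"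
  shows "(psi_dual_norm \<psi> :: ('a \<Rightarrow>\<^sub>L real)^'n \<Rightarrow> real) \<in> Nsc \<longleftrightarrow>
           psi_star \<psi> \<in> Psi_sc \<and> strictly_convex_norm (norm :: ('a \<Rightarrow>\<^sub>L real) \<Rightarrow> real)"
proof -
  have "(psi_dual_norm \<psi> :: ('a \<Rightarrow>\<^sub>L real)^'n \<Rightarrow> real) \<in> Nsc \<longleftrightarrow>
      strictly_convex_norm (psi_dual_norm \<psi> :: ('a \<Rightarrow>\<^sub>L real)^'n \<Rightarrow> real)"
    using N_is_norm[OF psi] N_sign N_compat[OF psi] by (auto simp: Nsc_def)
  moreover have "strictly_convex_norm (psi_dual_norm \<psi> :: ('a \<Rightarrow>\<^sub>L real)^'n \<Rightarrow> real) \<longleftrightarrow>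
      psi_star \<psi> \<in> Psi_sc \<and> strictly_convex_norm (norm :: ('a \<Rightarrow>\<^sub>L real) \<Rightarrow> real)"
    using dir_forward[OF psi X] dir_backward[OF psi] by (auto simp: Psi_sc_def)
  ultimately show ?thesis by simp
qed

theorem proposition3p3:
  fixes \<psi> :: "(real^'n) \<Rightarrow> real"
  assumes n2: "CARD('n) \<ge> 2"
    and X_nontriv: "\<exists>x::'a::real_normed_vector. x \<noteq> 0"
    and psi: "\<psi> \<in> Psi"
  shows "psi_star \<psi> \<in> Psi
    \<and> ((psi_dual_norm \<psi> :: ('a \<Rightarrow>\<^sub>L real)^'n \<Rightarrow> real) \<in> Nsc \<longleftrightarrow>
           psi_star \<psi> \<in> Psi_sc \<and> strictly_convex_norm (norm :: ('a \<Rightarrow>\<^sub>L real) \<Rightarrow> real))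
    \<and> (\<forall>(u :: 'n \<Rightarrow> ('a \<Rightarrow>\<^sub>L real)) s. (\<forall>i. norm (u i) = 1) \<and> s \<in> OmegaN \<longrightarrow>
           psi_star \<psi> s = psi_dual_norm \<psi> (\<chi> i. s$i *\<^sub>R u i))
    \<and> (\<forall>t\<in>OmegaN. \<forall>s\<in>OmegaN.
           (t \<bullet> s = \<psi> t * psi_star \<psi> s \<longleftrightarrow>
            (1 / psi_norm (psi_star \<psi>) s) *\<^sub>R s \<in> subdiff (psi_norm \<psi> :: real^'n \<Rightarrow> real) t))
    \<and> (\<forall>t\<in>OmegaN. \<psi> t = (SUP s\<in>OmegaN. (t \<bullet> s) / psi_star \<psi> s))"
  proof -
  have 1: "psi_star \<psi> \<in> Psi" by (rule part_i[OF psi])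
  have 2: "(psi_dual_norm \<psi> :: ('a \<Rightarrow>\<^sub>L real)^'n \<Rightarrow> real) \<in> Nsc \<longleftrightarrow>
           psi_star \<psi> \<in> Psi_sc \<and> strictly_convex_norm (norm :: ('a \<Rightarrow>\<^sub>L real) \<Rightarrow> real)"
    by (rule part_ii[OF psi X_nontriv])
  have 3: "\<forall>(u :: 'n \<Rightarrow> ('a \<Rightarrow>\<^sub>L real)) s. (\<forall>i. norm (u i) = 1) \<and> s \<in> OmegaN \<longrightarrow>
           psi_star \<psi> s = psi_dual_norm \<psi> (\<chi> i. s$i *\<^sub>R u i)"
    using part_iii by blast
  have 4: "\<forall>t\<in>OmegaN. \<forall>s\<in>OmegaN.
           (t \<bullet> s = \<psi> t * psi_star \<psi> s \<longleftrightarrow>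
            (1 / psi_norm (psi_star \<psi>) s) *\<^sub>R s \<in> subdiff (psi_norm \<psi> :: real^'n \<Rightarrow> real) t)"
    using part_iv[OF psi] by blast
  have 5: "\<forall>t\<in>OmegaN. \<psi> t = (SUP s\<in>OmegaN. (t \<bullet> s) / psi_star \<psi> s)"
    using part_v[OF psi] by blast
  show ?thesis using 1 2 3 4 5 by blast
qed

end
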